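(* Let $\Omega\in\{\Omega_A,\Omega_B,\Omega_C\}$, let $x,y$ be commuting indeterminates and $f(x,y)=256x+3(4y-3)(4y+1)\in\mathbb C[x,y]$. For every $p(x,y)\in\mathbb C[x,y]$, one has $\sharp(p(\Omega,\delta))=0$ if and only if $f(x,y)$ divides $p(x,y)$ in $\mathbb C[x,y]$.
   Context: All algebras are unital associative over $\mathbb C$, $[x,y]=xy-yx$, $\mathbf i=\sqrt{-1}$. $U(\mathfrak{sl}_2)$ is generated by $E,F,H$ with $[H,E]=2E$, $[H,F]=-2F$, $[E,F]=H$; $\Lambda=EF+FE+\frac{H^2}{2}$. $\Re$ is generated by $A,B,C,\Delta$ with $[A,B]=[B,C]=[C,A]=2\Delta$ and with $\alpha=[A,\Delta]+AC-BA$, $\beta=[B,\Delta]+BA-CB$, $\gamma=[C,\Delta]+CB-AC$ central; $\delta=A+B+C$ (central). $\Omega_A=\Delta^2+\tfrac{BAC+CAB}{2}+A^2+B\gamma-C\beta-A\delta$, $\Omega_B=\Delta^2+\tfrac{CBA+ABC}{2}+B^2+C\alpha-A\gamma-B\delta$, $\Omega_C=\Delta^2+\tfrac{ACB+BCA}{2}+C^2+A\beta-B\alpha-C\delta$; these are central, so $p(\Omega,\delta)$ is well defined. $\sharp:\Re\to U(\mathfrak{sl}_2)$ is the unique algebra homomorphism with $A\mapsto \frac{(E+F-2)(E+F+2)}{16}$, $B\mapsto\frac{(H-2)(H+2)}{16}$, $C\mapsto\frac{(\mathbf iE-\mathbf iF-2)(\mathbf iE-\mathbf iF+2)}{16}$,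 $\Delta\mapsto\frac{(H+2)F^2-(H-2)E^2}{64}$. *)

theory Defs
  imports Complex_Main "HOL-Computational_Algebra.Polynomial"
begin

text \<open>An element of the free algebra on generators of type 'g is a
finitely supported coefficient function on words.\<close>

type_synonym 'g ncpoly = "'g list \<Rightarrow> complex"

definition nc_finite :: "'g ncpoly \<Rightarrow> bool" where
  "nc_finite a \<longleftrightarrow> finite {w. a w \<noteq> 0}"

definition nc_zero :: "'g ncpoly" where "nc_zero = (\<lambda>w. 0)"
definition nc_const :: "complex \<Rightarrow> 'g ncpoly" where
  "nc_const c = (\<lambda>w. if w = [] then c else 0)"
definition nc_one :: "'g ncpoly" where "nc_one = nc_const 1"
definition nc_gen :: "'g \<Rightarrow> 'g ncpoly" where
  "nc_gen g = (\<lambda>w. if w = [g] then 1 else 0)"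
definition nc_add :: "'g ncpoly \<Rightarrow> 'g ncpoly \<Rightarrow> 'g ncpoly" where
  "nc_add a b = (\<lambda>w. a w + b w)"
definition nc_sub :: "'g ncpoly \<Rightarrow> 'g ncpoly \<Rightarrow> 'g ncpoly" where
  "nc_sub a b = (\<lambda>w. a w - b w)"
definition nc_smult :: "complex \<Rightarrow> 'g ncpoly \<Rightarrow> 'g ncpoly" where
  "nc_smult c a = (\<lambda>w. c * a w)"
definition nc_mult :: "'g ncpoly \<Rightarrow> 'g ncpoly \<Rightarrow> 'g ncpoly" where
  "nc_mult a b = (\<lambda>w. \<Sum>i\<le>length w. a (take i w) * b (drop i w))"
definition nc_comm :: "'g ncpoly \<Rightarrow> 'g ncpoly \<Rightarrow> 'g ncpoly" where
  "nc_comm a b = nc_sub (nc_mult a b) (nc_mult b a)"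
fun nc_pow :: "'g ncpoly \<Rightarrow> nat \<Rightarrow> 'g ncpoly" where
  "nc_pow a 0 = nc_one"
| "nc_pow a (Suc n) = nc_mult a (nc_pow a n)"

inductive_set nc_ideal :: "'g ncpoly set \<Rightarrow> 'g ncpoly set" for R where
  gen: "r \<in> R \<Longrightarrow> r \<in> nc_ideal R"
| zero: "nc_zero \<in> nc_ideal R"
| add: "a \<in> nc_ideal R \<Longrightarrow> b \<in> nc_ideal R \<Longrightarrow> nc_add a b \<in> nc_ideal R"
| smult: "a \<in> nc_ideal R \<Longrightarrow> nc_smult c a \<in> nc_ideal R"
| lmult: "a \<in> nc_ideal R \<Longrightarrow> nc_finite u \<Longrightarrow> nc_mult u a \<in> nc_ideal R"
| rmult: "a \<in> nc_ideal R \<Longrightarrow> nc_finite u \<Longrightarrow> nc_mult a u \<in> nc_ideal R"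

text \<open>Substitution (algebra homomorphism from a free algebra determined by
images of the generators), applied to finitely supported elements.\<close>
definition nc_word_image :: "('g \<Rightarrow> 'h ncpoly) \<Rightarrow> 'g list \<Rightarrow> 'h ncpoly" where
  "nc_word_image \<phi> w = foldr (\<lambda>g acc. nc_mult (\<phi> g) acc) w nc_one"
definition nc_subst :: "('g \<Rightarrow> 'h ncpoly) \<Rightarrow> 'g ncpoly \<Rightarrow> 'h ncpoly" where
  "nc_subst \<phi> a = (\<lambda>v. \<Sum>w\<in>{w. a w \<noteq> 0}. a w * nc_word_image \<phi> w v)"

text \<open>Evaluation of p in C[x,y] (represented as (C[y])[x], i.e. complex poly poly,
outer variable x, inner variable y) at X, Y: sum of c_ij X^i Y^j.\<close>
definition nc_eval2 :: "'g ncpoly \<Rightarrow> 'g ncpoly \<Rightarrow> complex poly poly \<Rightarrow> 'g ncpoly" where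
  "nc_eval2 X Y p = (\<lambda>v. \<Sum>i\<le>degree p. \<Sum>j\<le>degree (coeff p i).
       nc_smult (coeff (coeff p i) j) (nc_mult (nc_pow X i) (nc_pow Y j)) v)"

datatype sl2gen = gE | gF | gH

definition uE :: "sl2gen ncpoly" where "uE = nc_gen gE"
definition uF :: "sl2gen ncpoly" where "uF = nc_gen gF"
definition uH :: "sl2gen ncpoly" where "uH = nc_gen gH"

definition sl2_rels :: "sl2gen ncpoly set" where
  "sl2_rels = { nc_sub (nc_comm uH uE) (nc_smult 2 uE),
                nc_add (nc_comm uH uF) (nc_smult 2 uF),
                nc_sub (nc_comm uE uF) uH }"

definition zero_in_Usl2 :: "sl2gen ncpoly \<Rightarrow> bool" where
  "zero_in_Usl2 a \<longleftrightarrow> a \<in> nc_ideal sl2_rels"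

datatype regen = gA | gB | gC | gD

definition rA :: "regen ncpoly" where "rA = nc_gen gA"
definition rB :: "regen ncpoly" where "rB = nc_gen gB"
definition rC :: "regen ncpoly" where "rC = nc_gen gC"
definition rD :: "regen ncpoly" where "rD = nc_gen gD"

definition r_alpha :: "regen ncpoly" where
  "r_alpha = nc_add (nc_comm rA rD) (nc_sub (nc_mult rA rC) (nc_mult rB rA))"
definition r_beta :: "regen ncpoly" where
  "r_beta = nc_add (nc_comm rB rD) (nc_sub (nc_mult rB rA) (nc_mult rC rB))"
definition r_gamma :: "regen ncpoly" where
  "r_gamma = nc_add (nc_comm rC rD) (nc_sub (nc_mult rC rB) (nc_mult rA rC))"
definition r_delta :: "regen ncpoly" where
  "r_delta = nc_add (nc_add rA rB) rC"

definition Re_rels :: "regen ncpoly set" where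
  "Re_rels = { nc_sub (nc_comm rA rB) (nc_smult 2 rD),
               nc_sub (nc_comm rB rC) (nc_smult 2 rD),
               nc_sub (nc_comm rC rA) (nc_smult 2 rD) }
     \<union> {nc_comm z (nc_gen g) | z g. z \<in> {r_alpha, r_beta, r_gamma}}"

definition r_mult3 :: "regen ncpoly \<Rightarrow> regen ncpoly \<Rightarrow> regen ncpoly \<Rightarrow> regen ncpoly" where
  "r_mult3 a b c = nc_mult a (nc_mult b c)"

definition OmegaA :: "regen ncpoly" where
  "OmegaA = nc_sub (nc_add (nc_add (nc_add (nc_mult rD rD)
      (nc_smult (1/2) (nc_add (r_mult3 rB rA rC) (r_mult3 rC rA rB))))
      (nc_mult rA rA)) (nc_sub (nc_mult rB r_gamma) (nc_mult rC r_beta)))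
      (nc_mult rA r_delta)"
definition OmegaB :: "regen ncpoly" where
  "OmegaB = nc_sub (nc_add (nc_add (nc_add (nc_mult rD rD)
      (nc_smult (1/2) (nc_add (r_mult3 rC rB rA) (r_mult3 rA rB rC))))
      (nc_mult rB rB)) (nc_sub (nc_mult rC r_alpha) (nc_mult rA r_gamma)))
      (nc_mult rB r_delta)"
definition OmegaC :: "regen ncpoly" where
  "OmegaC = nc_sub (nc_add (nc_add (nc_add (nc_mult rD rD)
      (nc_smult (1/2) (nc_add (r_mult3 rA rC rB) (r_mult3 rB rC rA))))
      (nc_mult rC rC)) (nc_sub (nc_mult rA r_beta) (nc_mult rB r_alpha)))
      (nc_mult rC r_delta)"

definition sharp_gen :: "regen \<Rightarrow> sl2gen ncpoly" where
  "sharp_gen g = (case g of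
     gA \<Rightarrow> nc_smult (1/16) (nc_mult (nc_sub (nc_add uE uF) (nc_const 2))
                                     (nc_add (nc_add uE uF) (nc_const 2)))
   | gB \<Rightarrow> nc_smult (1/16) (nc_mult (nc_sub uH (nc_const 2)) (nc_add uH (nc_const 2)))
   | gC \<Rightarrow> nc_smult (1/16)
            (nc_mult (nc_sub (nc_sub (nc_smult \<i> uE) (nc_smult \<i> uF)) (nc_const 2))
                     (nc_add (nc_sub (nc_smult \<i> uE) (nc_smult \<i> uF)) (nc_const 2)))
   | gD \<Rightarrow> nc_smult (1/64)
            (nc_sub (nc_mult (nc_add uH (nc_const 2)) (nc_mult uF uF))
                    (nc_mult (nc_sub uH (nc_const 2)) (nc_mult uE uE))))"

definition sharp :: "regen ncpoly \<Rightarrow> sl2gen ncpoly" where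
  "sharp = nc_subst sharp_gen"

text \<open>f(x,y) = 256 x + 3 (4y-3)(4y+1), outer variable x, inner variable y.\<close>
definition f_xy :: "complex poly poly" where
  "f_xy = [: smult 3 ([:-3, 4:] * [:1, 4:]), [:256:] :]"

end

theory Submission
  imports Defs
begin


definition splits :: "'g list \<Rightarrow> ('g list \<times> 'g list) set" where
  "splits w = {(u,v). u @ v = w}"

lemma splits_eq_image: "splits w = (\<lambda>i. (take i w, drop i w)) ` {..length w}"
  unfolding splits_def
proof (safe)
  fix u v assume "w = u @ v"
  then show "(u, v) \<in> (\<lambda>i. (take i (u@v), drop i (u@v))) ` {..length (u@v)}"
    by (intro image_eqI[of _ _ "length u"]) auto
qed auto

lemma finite_splits[simp]: "finite (splits w)"
  by (simp add: splits_eq_image)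

lemma nc_mult_splits: "nc_mult a b w = (\<Sum>(u,v)\<in>splits w. a u * b v)"
proof -
  have inj: "inj_on (\<lambda>i. (take i w, drop i w)) {..length w}"
    by (intro inj_onI) (metis (no_types) Pair_inject atMost_iff length_take min.absorb2)
  show ?thesis unfolding nc_mult_def splits_eq_image
    by (subst sum.reindex[OF inj]) (simp add: case_prod_beta)
qed

lemma nc_mult_assoc: "nc_mult (nc_mult a b) c = nc_mult a (nc_mult b c)"
proof
  fix w
  have "nc_mult (nc_mult a b) c w = (\<Sum>(x,z)\<in>splits w. (\<Sum>(u,v)\<in>splits x. a u * b v) * c z)"
    by (simp add: nc_mult_splits)
  also have "\<dots> = (\<Sum>(x,z)\<in>splits w. \<Sum>(u,v)\<in>splits x. a u * b v * c z)"
    by (simp add: sum_distrib_right case_prod_beta)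
  also have "\<dots> = (\<Sum>p\<in>splits w. \<Sum>q\<in>splits (fst p). a (fst q) * b (snd q) * c (snd p))"
    by (simp add: case_prod_beta)
  also have "\<dots> = (\<Sum>(p,q)\<in>(SIGMA p:splits w. splits (fst p)). a (fst q) * b (snd q) * c (snd p))"
    by (rule sum.Sigma) auto
  also have "\<dots> = (\<Sum>(u,(v,z))\<in>{(u,v,z). u@v@z = w}. a u * b v * c z)"
    by (rule sum.reindex_bij_witness[of _ "\<lambda>(u,v,z). ((u@v,z),(u,v))" "\<lambda>(p,q). (fst q, snd q, snd p)"])
       (auto simp: splits_def)
  also have "\<dots> = (\<Sum>(p,q)\<in>(SIGMA p:splits w. splits (snd p)). a (fst p) * b (fst q) * c (snd q))"
    by (rule sum.reindex_bij_witness[of _ "\<lambda>(p,q). (fst p, fst q, snd q)" "\<lambda>(u,v,z). ((u,v@z),(v,z))"])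
       (auto simp: splits_def)
  also have "\<dots> = (\<Sum>p\<in>splits w. \<Sum>q\<in>splits (snd p). a (fst p) * b (fst q) * c (snd q))"
    by (rule sum.Sigma[symmetric]) auto
  also have "\<dots> = nc_mult a (nc_mult b c) w"
    by (simp add: nc_mult_splits sum_distrib_left case_prod_beta mult.assoc)
  finally show "nc_mult (nc_mult a b) c w = nc_mult a (nc_mult b c) w" .
qed

lemma nc_mult_const_left: "nc_mult (nc_const c) a = nc_smult c a"
proof
  fix w
  have "nc_mult (nc_const c) a w = (\<Sum>p\<in>splits w. if p = ([],w) then c * a w else 0)"
    unfolding nc_mult_splits by (rule sum.cong) (auto simp: nc_const_def splits_def split: if_splits)
  also have "\<dots> = c * a w" by (simp only: sum.delta finite_splits) (simp add: splits_def)
  finally show "nc_mult (nc_const c) a w = nc_smult c a w" by (simp add: nc_smult_def)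
qed

lemma nc_mult_const_right: "nc_mult a (nc_const c) = nc_smult c a"
proof
  fix w
  have "nc_mult a (nc_const c) w = (\<Sum>p\<in>splits w. if p = (w,[]) then c * a w else 0)"
    unfolding nc_mult_splits by (rule sum.cong) (auto simp: nc_const_def splits_def split: if_splits)
  also have "\<dots> = c * a w" by (simp only: sum.delta finite_splits) (simp add: splits_def)
  finally show "nc_mult a (nc_const c) w = nc_smult c a w" by (simp add: nc_smult_def)
qed

lemma nc_smult_1[simp]: "nc_smult 1 a = a" by (simp add: nc_smult_def)

lemma nc_mult_one_left[simp]: "nc_mult nc_one a = a"
  by (simp add: nc_one_def nc_mult_const_left)
lemma nc_mult_one_right[simp]: "nc_mult a nc_one = a"
  by (simp add: nc_one_def nc_mult_const_right)

lemma nc_mult_add_left: "nc_mult (nc_add a b) c = nc_add (nc_mult a c) (nc_mult b c)"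
  by (simp add: nc_mult_def nc_add_def fun_eq_iff distrib_right sum.distrib)
lemma nc_mult_add_right: "nc_mult c (nc_add a b) = nc_add (nc_mult c a) (nc_mult c b)"
  by (simp add: nc_mult_def nc_add_def fun_eq_iff distrib_left sum.distrib)
lemma nc_mult_sub_left: "nc_mult (nc_sub a b) c = nc_sub (nc_mult a c) (nc_mult b c)"
  by (simp add: nc_mult_def nc_sub_def fun_eq_iff left_diff_distrib sum_subtractf)
lemma nc_mult_sub_right: "nc_mult c (nc_sub a b) = nc_sub (nc_mult c a) (nc_mult c b)"
  by (simp add: nc_mult_def nc_sub_def fun_eq_iff right_diff_distrib sum_subtractf)
lemma nc_mult_smult_left: "nc_mult (nc_smult k a) c = nc_smult k (nc_mult a c)"
  by (simp add: nc_mult_def nc_smult_def fun_eq_iff sum_distrib_left mult.assoc)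
lemma nc_mult_smult_right: "nc_mult c (nc_smult k a) = nc_smult k (nc_mult c a)"
  by (simp add: nc_mult_def nc_smult_def fun_eq_iff sum_distrib_left algebra_simps)
lemma nc_mult_zero_left[simp]: "nc_mult nc_zero a = nc_zero"
  by (simp add: nc_mult_def nc_zero_def fun_eq_iff)
lemma nc_mult_zero_right[simp]: "nc_mult a nc_zero = nc_zero"
  by (simp add: nc_mult_def nc_zero_def fun_eq_iff)

lemma supp_mult: "{w. nc_mult a b w \<noteq> 0} \<subseteq> (\<lambda>(u,v). u@v) ` ({u. a u \<noteq> 0} \<times> {v. b v \<noteq> 0})"
proof
  fix w assume "w \<in> {w. nc_mult a b w \<noteq> 0}"
  then have "(\<Sum>(u,v)\<in>splits w. a u * b v) \<noteq> 0" by (simp add: nc_mult_splits)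
  then obtain p where "p \<in> splits w" "(case p of (u,v) \<Rightarrow> a u * b v) \<noteq> 0"
    by (meson sum.not_neutral_contains_not_neutral)
  then show "w \<in> (\<lambda>(u,v). u@v) ` ({u. a u \<noteq> 0} \<times> {v. b v \<noteq> 0})"
    by (auto simp: splits_def image_iff split: prod.splits)
qed

lemma fin_zero[simp]: "nc_finite nc_zero" by (simp add: nc_finite_def nc_zero_def)
lemma fin_const[simp]: "nc_finite (nc_const c)"
proof -
  have "{w. nc_const c w \<noteq> 0} \<subseteq> {[]}" by (auto simp: nc_const_def split: if_splits)
  then show ?thesis unfolding nc_finite_def by (rule finite_subset) auto
qed
lemma fin_one[simp]: "nc_finite nc_one" by (simp add: nc_one_def)
lemma fin_gen[simp]: "nc_finite (nc_gen g)"
proof -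
  have "{w. nc_gen g w \<noteq> 0} \<subseteq> {[g]}" by (auto simp: nc_gen_def split: if_splits)
  then show ?thesis unfolding nc_finite_def by (rule finite_subset) auto
qed
lemma fin_add[simp]: "nc_finite a \<Longrightarrow> nc_finite b \<Longrightarrow> nc_finite (nc_add a b)"
  unfolding nc_finite_def
  by (rule finite_subset[of _ "{w. a w \<noteq> 0} \<union> {w. b w \<noteq> 0}"]) (auto simp: nc_add_def)
lemma fin_sub[simp]: "nc_finite a \<Longrightarrow> nc_finite b \<Longrightarrow> nc_finite (nc_sub a b)"
  unfolding nc_finite_def
  by (rule finite_subset[of _ "{w. a w \<noteq> 0} \<union> {w. b w \<noteq> 0}"]) (auto simp: nc_sub_def)
lemma fin_smult[simp]: "nc_finite a \<Longrightarrow> nc_finite (nc_smult c a)"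
  unfolding nc_finite_def
  by (rule finite_subset[of _ "{w. a w \<noteq> 0}"]) (auto simp: nc_smult_def)
lemma fin_mult[simp]: "nc_finite a \<Longrightarrow> nc_finite b \<Longrightarrow> nc_finite (nc_mult a b)"
  unfolding nc_finite_def by (rule finite_subset[OF supp_mult]) auto
lemma fin_comm[simp]: "nc_finite a \<Longrightarrow> nc_finite b \<Longrightarrow> nc_finite (nc_comm a b)"
  by (simp add: nc_comm_def)
lemma fin_pow[simp]: "nc_finite a \<Longrightarrow> nc_finite (nc_pow a n)"
  by (induction n) auto

abbreviation supp :: "'g ncpoly \<Rightarrow> 'g list set" where "supp a \<equiv> {w. a w \<noteq> 0}"

lemma nc_mult_restrict:
  assumes "supp a \<subseteq> Sa" "supp b \<subseteq> Sb"
  shows "nc_mult a b x = (\<Sum>p\<in>{p\<in>Sa\<times>Sb. fst p @ snd p = x}. a (fst p) * b (snd p))"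
proof -
  have "nc_mult a b x = (\<Sum>p\<in>splits x. a (fst p) * b (snd p))"
    by (simp add: nc_mult_splits case_prod_beta)
  also have "\<dots> = (\<Sum>p\<in>splits x \<inter> (Sa\<times>Sb). a (fst p) * b (snd p))"
    by (rule sum.mono_neutral_right) (use assms in auto)
  also have "splits x \<inter> (Sa\<times>Sb) = {p\<in>Sa\<times>Sb. fst p @ snd p = x}"
    by (auto simp: splits_def)
  finally show ?thesis .
qed

lemma conv_sum:
  fixes g :: "complex \<Rightarrow> 'g list \<Rightarrow> 'b::comm_monoid_add"
  assumes "finite Sa" "finite Sb" "supp a \<subseteq> Sa" "supp b \<subseteq> Sb"
    and gsum: "\<And>x h (P::('g list \<times> 'g list) set). finite P \<Longrightarrow> g (sum h P) x = (\<Sum>p\<in>P. g (h p) x)"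
  shows "(\<Sum>x\<in>(\<lambda>p. fst p @ snd p) ` (Sa\<times>Sb). g (nc_mult a b x) x)
       = (\<Sum>p\<in>Sa\<times>Sb. g (a (fst p) * b (snd p)) (fst p @ snd p))"
proof -
  have fin: "finite (Sa\<times>Sb)" using assms by auto
  have "(\<Sum>x\<in>(\<lambda>p. fst p @ snd p) ` (Sa\<times>Sb). g (nc_mult a b x) x)
     = (\<Sum>x\<in>(\<lambda>p. fst p @ snd p) ` (Sa\<times>Sb). \<Sum>p\<in>{p\<in>Sa\<times>Sb. fst p @ snd p = x}. g (a (fst p) * b (snd p)) x)"
    apply (rule sum.cong[OF refl])
    apply (subst nc_mult_restrict[OF assms(3,4)])
    apply (subst gsum)
     apply (rule finite_subset[OF _ fin])
    by auto
  also have "\<dots> = (\<Sum>x\<in>(\<lambda>p. fst p @ snd p) ` (Sa\<times>Sb). \<Sum>p\<in>{p\<in>Sa\<times>Sb. fst p @ snd p = x}. g (a (fst p) * b (snd p)) (fst p @ snd p))"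
    by (rule sum.cong[OF refl], rule sum.cong[OF refl]) auto
  also have "\<dots> = (\<Sum>p\<in>Sa\<times>Sb. g (a (fst p) * b (snd p)) (fst p @ snd p))"
    by (rule sum.image_gen[symmetric, OF fin])
  finally show ?thesis .
qed

lemma supp_mult': "supp (nc_mult a b) \<subseteq> (\<lambda>p. fst p @ snd p) ` (supp a \<times> supp b)"
  using supp_mult[of a b] by (simp add: case_prod_beta)

section \<open>Substitution\<close>

lemma word_image_Nil[simp]: "nc_word_image \<phi> [] = nc_one"
  by (simp add: nc_word_image_def)
lemma word_image_Cons[simp]: "nc_word_image \<phi> (g#w) = nc_mult (\<phi> g) (nc_word_image \<phi> w)"
  by (simp add: nc_word_image_def)
lemma word_image_append: "nc_word_image \<phi> (u@v) = nc_mult (nc_word_image \<phi> u) (nc_word_image \<phi> v)"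
  by (induction u) (simp_all add: nc_mult_assoc)

lemma subst_rep:
  assumes "finite S" "supp a \<subseteq> S"
  shows "nc_subst \<phi> a v = (\<Sum>w\<in>S. a w * nc_word_image \<phi> w v)"
  unfolding nc_subst_def by (rule sum.mono_neutral_left) (use assms in auto)

lemma subst_add:
  assumes "nc_finite a" "nc_finite b"
  shows "nc_subst \<phi> (nc_add a b) = nc_add (nc_subst \<phi> a) (nc_subst \<phi> b)"
proof
  fix v
  let ?S = "supp a \<union> supp b"
  have f: "finite ?S" using assms by (simp add: nc_finite_def)
  show "nc_subst \<phi> (nc_add a b) v = nc_add (nc_subst \<phi> a) (nc_subst \<phi> b) v"
    unfolding nc_add_def by (subst (1 2 3) subst_rep[OF f]) (auto simp: sum.distrib distrib_right)
qed

lemma subst_sub: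
  assumes "nc_finite a" "nc_finite b"
  shows "nc_subst \<phi> (nc_sub a b) = nc_sub (nc_subst \<phi> a) (nc_subst \<phi> b)"
proof
  fix v
  let ?S = "supp a \<union> supp b"
  have f: "finite ?S" using assms by (simp add: nc_finite_def)
  show "nc_subst \<phi> (nc_sub a b) v = nc_sub (nc_subst \<phi> a) (nc_subst \<phi> b) v"
    unfolding nc_sub_def by (subst (1 2 3) subst_rep[OF f]) (auto simp: sum_subtractf left_diff_distrib)
qed

lemma subst_smult:
  assumes "nc_finite a"
  shows "nc_subst \<phi> (nc_smult c a) = nc_smult c (nc_subst \<phi> a)"
proof
  fix v
  have f: "finite (supp a)" using assms by (simp add: nc_finite_def)
  show "nc_subst \<phi> (nc_smult c a) v = nc_smult c (nc_subst \<phi> a) v"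
    unfolding nc_smult_def by (subst (1 2) subst_rep[OF f]) (auto simp: sum_distrib_left mult.assoc)
qed

lemma subst_gen: "nc_subst \<phi> (nc_gen g) = \<phi> g"
proof
  fix v
  show "nc_subst \<phi> (nc_gen g) v = \<phi> g v"
    by (subst subst_rep[of "{[g]}"]) (auto simp: nc_gen_def)
qed

lemma subst_const: "nc_subst \<phi> (nc_const c) = nc_const c"
proof
  fix v
  show "nc_subst \<phi> (nc_const c) v = nc_const c v"
    by (subst subst_rep[of "{[]}"]) (auto simp: nc_const_def nc_one_def)
qed

lemma subst_mult:
  assumes "nc_finite a" "nc_finite b"
  shows "nc_subst \<phi> (nc_mult a b) = nc_mult (nc_subst \<phi> a) (nc_subst \<phi> b)"
proof
  fix v
  let ?Sa = "supp a" and ?Sb = "supp b"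
  have fa: "finite ?Sa" and fb: "finite ?Sb" using assms by (auto simp: nc_finite_def)
  let ?S = "(\<lambda>p. fst p @ snd p) ` (?Sa\<times>?Sb)"
  let ?I = "nc_word_image \<phi>"
  have "nc_subst \<phi> (nc_mult a b) v = (\<Sum>x\<in>?S. nc_mult a b x * ?I x v)"
    by (rule subst_rep) (use fa fb supp_mult' in auto)
  also have "\<dots> = (\<Sum>p\<in>?Sa\<times>?Sb. a (fst p) * b (snd p) * ?I (fst p @ snd p) v)"
    by (rule conv_sum[OF fa fb, where g="\<lambda>c x. c * ?I x v"]) (auto simp: sum_distrib_right)
  also have "\<dots> = (\<Sum>u\<in>?Sa. \<Sum>w\<in>?Sb. a u * b w * nc_mult (?I u) (?I w) v)"
    by (simp add: sum.cartesian_product word_image_append case_prod_beta)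
  also have "\<dots> = (\<Sum>u\<in>?Sa. \<Sum>w\<in>?Sb. \<Sum>n\<in>splits v. a u * b w * (?I u (fst n) * ?I w (snd n)))"
    by (simp add: nc_mult_splits sum_distrib_left case_prod_beta)
  also have "\<dots> = (\<Sum>u\<in>?Sa. \<Sum>n\<in>splits v. \<Sum>w\<in>?Sb. a u * b w * (?I u (fst n) * ?I w (snd n)))"
    by (rule sum.cong[OF refl], rule sum.swap)
  also have "\<dots> = (\<Sum>n\<in>splits v. \<Sum>u\<in>?Sa. \<Sum>w\<in>?Sb. a u * b w * (?I u (fst n) * ?I w (snd n)))"
    by (rule sum.swap)
  also have "\<dots> = nc_mult (nc_subst \<phi> a) (nc_subst \<phi> b) v"
    by (simp add: nc_mult_splits nc_subst_def sum_product case_prod_beta mult_ac)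
  finally show "nc_subst \<phi> (nc_mult a b) v = nc_mult (nc_subst \<phi> a) (nc_subst \<phi> b) v" .
qed


lemma subst_const': "nc_subst \<phi> nc_one = nc_one"
  by (simp add: nc_one_def subst_const)

lemma subst_pow: "nc_finite a \<Longrightarrow> nc_subst \<phi> (nc_pow a n) = nc_pow (nc_subst \<phi> a) n"
  by (induction n) (simp_all add: subst_const' subst_mult)

lemma fin_word_image: "(\<And>g. nc_finite (\<phi> g)) \<Longrightarrow> nc_finite (nc_word_image \<phi> w)"
  by (induction w) auto

lemma fin_subst:
  assumes "nc_finite a" "\<And>g. nc_finite (\<phi> g)"
  shows "nc_finite (nc_subst \<phi> a)"
proof -
  have "supp (nc_subst \<phi> a) \<subseteq> (\<Union>w\<in>supp a. supp (nc_word_image \<phi> w))"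
  proof
    fix v assume "v \<in> supp (nc_subst \<phi> a)"
    then have "(\<Sum>w\<in>supp a. a w * nc_word_image \<phi> w v) \<noteq> 0" by (simp add: nc_subst_def)
    then obtain w where "w \<in> supp a" "a w * nc_word_image \<phi> w v \<noteq> 0"
      by (meson sum.not_neutral_contains_not_neutral)
    then show "v \<in> (\<Union>w\<in>supp a. supp (nc_word_image \<phi> w))" by auto
  qed
  moreover have "finite (\<Union>w\<in>supp a. supp (nc_word_image \<phi> w))"
    using assms fin_word_image[of \<phi>] by (auto simp: nc_finite_def)
  ultimately show ?thesis unfolding nc_finite_def by (rule finite_subset)
qed

lemma smult_sum2: "smult c (\<Sum>i\<in>S. f i) = (\<Sum>i\<in>S. smult c (f i))"
  by (induction S rule: infinite_finite_induct) (auto simp: smult_add_right)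

section \<open>The representation\<close>

type_synonym vec = "nat \<Rightarrow> complex poly"

definition lam :: "complex poly" where "lam = [:0,1:]"

definition opE :: "vec \<Rightarrow> vec" where
  "opE v k = of_nat (Suc k) * (lam - of_nat k) * v (Suc k)"
definition opF :: "vec \<Rightarrow> vec" where
  "opF v k = (case k of 0 \<Rightarrow> 0 | Suc j \<Rightarrow> v j)"
definition opH :: "vec \<Rightarrow> vec" where
  "opH v k = (lam - 2 * of_nat k) * v k"

primrec opg :: "sl2gen \<Rightarrow> vec \<Rightarrow> vec" where
  "opg gE = opE" | "opg gF = opF" | "opg gH = opH"

primrec act :: "sl2gen list \<Rightarrow> vec \<Rightarrow> vec" where
  "act [] v = v" | "act (g#w) v = opg g (act w v)"

lemma act_append: "act (u@w) v = act u (act w v)"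
  by (induction u) auto

lemma opg_add: "opg g (\<lambda>k. v1 k + v2 k) = (\<lambda>k. opg g v1 k + opg g v2 k)"
  by (cases g) (auto simp: opE_def opF_def opH_def fun_eq_iff algebra_simps split: nat.splits)
lemma opg_scal: "opg g (\<lambda>k. p * v k) = (\<lambda>k. p * opg g v k)"
  by (cases g) (auto simp: opE_def opF_def opH_def fun_eq_iff algebra_simps split: nat.splits)
lemma opg_zero: "opg g (\<lambda>k. 0) = (\<lambda>k. 0)"
  by (cases g) (auto simp: opE_def opF_def opH_def fun_eq_iff algebra_simps split: nat.splits)

lemma act_add: "act w (\<lambda>k. v1 k + v2 k) = (\<lambda>k. act w v1 k + act w v2 k)"
  by (induction w) (auto simp: opg_add)
lemma act_scal: "act w (\<lambda>k. p * v k) = (\<lambda>k. p * act w v k)"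
  by (induction w) (auto simp: opg_scal)
lemma act_zero: "act w (\<lambda>k. 0) = (\<lambda>k. 0)"
  by (induction w) (auto simp: opg_zero)
lemma act_smult: "act w (\<lambda>k. smult c (v k)) = (\<lambda>k. smult c (act w v k))"
  using act_scal[of w "[:c:]" v] by simp
lemma act_sum: "finite A \<Longrightarrow> act w (\<lambda>k. \<Sum>i\<in>A. F i k) = (\<lambda>k. \<Sum>i\<in>A. act w (F i) k)"
  by (induction A rule: finite_induct) (auto simp: act_zero act_add)

definition rho :: "sl2gen ncpoly \<Rightarrow> vec \<Rightarrow> vec" where
  "rho a v k = (\<Sum>w\<in>supp a. smult (a w) (act w v k))"

lemma rho_fun: "rho a v = (\<lambda>k. \<Sum>w\<in>supp a. smult (a w) (act w v k))"
  by (simp add: fun_eq_iff rho_def)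

lemma smult_2: "smult (2::complex) p = 2 * p"
  by (simp add: numeral_mult_conv_smult)

lemma rho_rep:
  assumes "finite S" "supp a \<subseteq> S"
  shows "rho a v k = (\<Sum>w\<in>S. smult (a w) (act w v k))"
  unfolding rho_def by (rule sum.mono_neutral_left) (use assms in auto)

lemma rho_add:
  assumes "nc_finite a" "nc_finite b"
  shows "rho (nc_add a b) v k = rho a v k + rho b v k"
proof -
  let ?S = "supp a \<union> supp b"
  have f: "finite ?S" using assms by (simp add: nc_finite_def)
  show ?thesis
    by (subst (1 2 3) rho_rep[OF f]) (auto simp: nc_add_def sum.distrib smult_add_left)
qed

lemma rho_sub:
  assumes "nc_finite a" "nc_finite b"
  shows "rho (nc_sub a b) v k = rho a v k - rho b v k"
proof -
  let ?S = "supp a \<union> supp b"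
  have f: "finite ?S" using assms by (simp add: nc_finite_def)
  show ?thesis
    by (subst (1 2 3) rho_rep[OF f]) (auto simp: nc_sub_def sum_subtractf smult_diff_left)
qed

lemma rho_smult:
  assumes "nc_finite a"
  shows "rho (nc_smult c a) v k = smult c (rho a v k)"
proof -
  have f: "finite (supp a)" using assms by (simp add: nc_finite_def)
  show ?thesis
    by (subst (1 2) rho_rep[OF f]) (auto simp: nc_smult_def smult_sum2)
qed

lemma rho_gen: "rho (nc_gen g) v = opg g v"
proof
  fix k show "rho (nc_gen g) v k = opg g v k"
    by (subst rho_rep[of "{[g]}"]) (auto simp: nc_gen_def)
qed

lemma rho_const: "rho (nc_const c) v k = smult c (v k)"
  by (subst rho_rep[of "{[]}"]) (auto simp: nc_const_def)

lemma rho_one: "rho nc_one v = v"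
  by (simp add: nc_one_def rho_const fun_eq_iff)

lemma rho_zero: "rho nc_zero v = (\<lambda>k. 0)"
  by (simp add: rho_def nc_zero_def fun_eq_iff)

lemma rho_mult:
  assumes "nc_finite a" "nc_finite b"
  shows "rho (nc_mult a b) v = rho a (rho b v)"
proof
  fix k
  let ?Sa = "supp a" and ?Sb = "supp b"
  have fa: "finite ?Sa" and fb: "finite ?Sb" using assms by (auto simp: nc_finite_def)
  let ?S = "(\<lambda>p. fst p @ snd p) ` (?Sa\<times>?Sb)"
  have "rho (nc_mult a b) v k = (\<Sum>x\<in>?S. smult (nc_mult a b x) (act x v k))"
    by (rule rho_rep) (use fa fb supp_mult' in auto)
  also have "\<dots> = (\<Sum>p\<in>?Sa\<times>?Sb. smult (a (fst p) * b (snd p)) (act (fst p @ snd p) v k))"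
    by (rule conv_sum[OF fa fb, where g="\<lambda>c x. smult c (act x v k)"]) (auto simp: smult_sum)
  also have "\<dots> = (\<Sum>u\<in>?Sa. \<Sum>w\<in>?Sb. smult (a u) (smult (b w) (act u (act w v) k)))"
    by (simp add: sum.cartesian_product act_append case_prod_beta)
  also have "\<dots> = (\<Sum>u\<in>?Sa. smult (a u) (act u (\<lambda>k. \<Sum>w\<in>?Sb. smult (b w) (act w v k)) k))"
    by (simp add: act_sum[OF fb] act_smult smult_sum2)
  also have "\<dots> = rho a (rho b v) k"
    by (subst rho_def) (simp add: rho_fun)
  finally show "rho (nc_mult a b) v k = rho a (rho b v) k" .
qed

lemma rho_comm:
  assumes "nc_finite a" "nc_finite b"
  shows "rho (nc_comm a b) v k = rho a (rho b v) k - rho b (rho a v) k"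
  using assms by (simp add: nc_comm_def rho_sub rho_mult)

lemma rho_zero_vec: "rho u (\<lambda>k. 0) = (\<lambda>k. 0)"
  by (simp add: rho_def act_zero fun_eq_iff)

lemma rel1: "rho (nc_sub (nc_comm uH uE) (nc_smult 2 uE)) v = (\<lambda>k. 0)"
proof
  fix k
  have "rho (nc_sub (nc_comm uH uE) (nc_smult 2 uE)) v k = opH (opE v) k - opE (opH v) k - smult 2 (opE v k)"
    by (simp add: rho_sub rho_comm rho_smult rho_gen uE_def uH_def)
  also have "\<dots> = 0" unfolding opE_def opH_def smult_2 by (simp add: of_nat_Suc algebra_simps)
  finally show "rho (nc_sub (nc_comm uH uE) (nc_smult 2 uE)) v k = 0" .
qed
lemma rel2: "rho (nc_add (nc_comm uH uF) (nc_smult 2 uF)) v = (\<lambda>k. 0)"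
proof
  fix k
  have "rho (nc_add (nc_comm uH uF) (nc_smult 2 uF)) v k = opH (opF v) k - opF (opH v) k + smult 2 (opF v k)"
    by (simp add: rho_add rho_comm rho_smult rho_gen uF_def uH_def)
  also have "\<dots> = 0" unfolding opF_def opH_def smult_2 by (cases k) (auto simp: of_nat_Suc algebra_simps)
  finally show "rho (nc_add (nc_comm uH uF) (nc_smult 2 uF)) v k = 0" .
qed
lemma rel3: "rho (nc_sub (nc_comm uE uF) uH) v = (\<lambda>k. 0)"
proof
  fix k
  have "rho (nc_sub (nc_comm uE uF) uH) v k = opE (opF v) k - opF (opE v) k - opH v k"
    by (simp add: rho_sub rho_comm rho_gen uE_def uF_def uH_def)
  also have "\<dots> = 0" unfolding opE_def opF_def opH_def by (cases k) (auto simp: of_nat_Suc algebra_simps)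
  finally show "rho (nc_sub (nc_comm uE uF) uH) v k = 0" .
qed

lemma rels_zero: "r \<in> sl2_rels \<Longrightarrow> rho r v = (\<lambda>k. 0)"
  unfolding sl2_rels_def using rel1 rel2 rel3 by blast

lemma ideal_props: "a \<in> nc_ideal sl2_rels \<Longrightarrow> nc_finite a \<and> (\<forall>v. rho a v = (\<lambda>k. 0))"
proof (induction rule: nc_ideal.induct)
  case (gen r)
  then show ?case
    by (auto simp: sl2_rels_def uE_def uF_def uH_def rels_zero[OF gen] nc_comm_def)
next
  case zero
  then show ?case by (simp add: rho_zero)
next
  case (add a b)
  then show ?case by (simp add: rho_add fun_eq_iff)
next
  case (smult a c)
  then show ?case by (simp add: rho_smult fun_eq_iff)
next
  case (lmult a u)
  then show ?case by (simp add: rho_mult rho_zero_vec)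
next
  case (rmult a u)
  then show ?case by (simp add: rho_mult fun_eq_iff)
qed


definition Rel :: "sl2gen ncpoly \<Rightarrow> sl2gen ncpoly \<Rightarrow> bool" where
  "Rel a b \<longleftrightarrow> nc_finite a \<and> nc_finite b \<and> nc_sub a b \<in> nc_ideal sl2_rels"

abbreviation "SI \<equiv> nc_ideal sl2_rels"

lemma ideal_sub: "a \<in> SI \<Longrightarrow> b \<in> SI \<Longrightarrow> nc_sub a b \<in> SI"
proof -
  assume a: "a \<in> SI" and b: "b \<in> SI"
  have "nc_sub a b = nc_add a (nc_smult (-1) b)" by (simp add: nc_sub_def nc_add_def nc_smult_def fun_eq_iff)
  then show ?thesis using a b by (simp add: nc_ideal.add nc_ideal.smult)
qed

lemma ideal_eq: "a \<in> SI \<Longrightarrow> a = b \<Longrightarrow> b \<in> SI" by simp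

lemma Rel_refl: "nc_finite a \<Longrightarrow> a = b \<Longrightarrow> Rel a b"
  unfolding Rel_def using nc_ideal.zero[of sl2_rels]
  by (auto simp: nc_sub_def nc_zero_def)

lemma Rel_fin: "Rel a b \<Longrightarrow> nc_finite a" "Rel a b \<Longrightarrow> nc_finite b"
  by (auto simp: Rel_def)

lemma part_equivp_Rel: "part_equivp Rel"
proof (rule part_equivpI)
  show "\<exists>x. Rel x x" using Rel_refl[of nc_zero] by auto
  show "symp Rel"
  proof (rule sympI)
    fix a b assume "Rel a b"
    then have "nc_smult (-1) (nc_sub a b) \<in> SI" by (simp add: Rel_def nc_ideal.smult)
    moreover have "nc_smult (-1) (nc_sub a b) = nc_sub b a" by (simp add: nc_sub_def nc_smult_def fun_eq_iff)
    ultimately show "Rel b a" using \<open>Rel a b\<close> by (simp add: Rel_def)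
  qed
  show "transp Rel"
  proof (rule transpI)
    fix a b c assume "Rel a b" "Rel b c"
    then have "nc_add (nc_sub a b) (nc_sub b c) \<in> SI" by (simp add: Rel_def nc_ideal.add)
    moreover have "nc_add (nc_sub a b) (nc_sub b c) = nc_sub a c" by (simp add: nc_sub_def nc_add_def fun_eq_iff)
    ultimately show "Rel a c" using \<open>Rel a b\<close> \<open>Rel b c\<close> by (simp add: Rel_def)
  qed
qed

quotient_type U = "sl2gen ncpoly" / partial: Rel
  morphisms rep_U abs_U
  by (rule part_equivp_Rel)

lemma resp_add: "Rel a a' \<Longrightarrow> Rel b b' \<Longrightarrow> Rel (nc_add a b) (nc_add a' b')"
proof -
  assume "Rel a a'" "Rel b b'"
  moreover have "nc_sub (nc_add a b) (nc_add a' b') = nc_add (nc_sub a a') (nc_sub b b')"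
    by (simp add: nc_sub_def nc_add_def fun_eq_iff)
  ultimately show ?thesis by (simp add: Rel_def nc_ideal.add)
qed

lemma resp_sub: "Rel a a' \<Longrightarrow> Rel b b' \<Longrightarrow> Rel (nc_sub a b) (nc_sub a' b')"
proof -
  assume "Rel a a'" "Rel b b'"
  moreover have "nc_sub (nc_sub a b) (nc_sub a' b') = nc_sub (nc_sub a a') (nc_sub b b')"
    by (simp add: nc_sub_def fun_eq_iff)
  ultimately show ?thesis by (simp add: Rel_def ideal_sub)
qed

lemma resp_smult: "Rel a a' \<Longrightarrow> Rel (nc_smult c a) (nc_smult c a')"
proof -
  assume "Rel a a'"
  moreover have "nc_sub (nc_smult c a) (nc_smult c a') = nc_smult c (nc_sub a a')"
    by (simp add: nc_sub_def nc_smult_def fun_eq_iff algebra_simps)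
  ultimately show ?thesis by (simp add: Rel_def nc_ideal.smult)
qed

lemma resp_mult: "Rel a a' \<Longrightarrow> Rel b b' \<Longrightarrow> Rel (nc_mult a b) (nc_mult a' b')"
proof -
  assume ra: "Rel a a'" and rb: "Rel b b'"
  have "nc_sub (nc_mult a b) (nc_mult a' b') = nc_add (nc_mult (nc_sub a a') b) (nc_mult a' (nc_sub b b'))"
    by (simp only: nc_mult_sub_left nc_mult_sub_right) (simp add: nc_sub_def nc_add_def fun_eq_iff)
  moreover have "nc_mult (nc_sub a a') b \<in> SI" using ra rb by (simp add: Rel_def nc_ideal.rmult)
  moreover have "nc_mult a' (nc_sub b b') \<in> SI" using ra rb by (simp add: Rel_def nc_ideal.lmult)
  ultimately show ?thesis using ra rb by (simp add: Rel_def nc_ideal.add)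
qed

instantiation U :: ring_1
begin

lift_definition zero_U :: U is nc_zero by (simp add: Rel_refl)
lift_definition one_U :: U is nc_one by (simp add: Rel_refl)
lift_definition plus_U :: "U \<Rightarrow> U \<Rightarrow> U" is nc_add by (rule resp_add)
lift_definition minus_U :: "U \<Rightarrow> U \<Rightarrow> U" is nc_sub by (rule resp_sub)
lift_definition uminus_U :: "U \<Rightarrow> U" is "nc_smult (-1)" by (rule resp_smult)
lift_definition times_U :: "U \<Rightarrow> U \<Rightarrow> U" is nc_mult by (rule resp_mult)

instance
proof
  fix a b c :: U
  show "a + b + c = a + (b + c)"
    by transfer (rule Rel_refl, simp add: Rel_def, simp add: Rel_def nc_add_def fun_eq_iff add.assoc)
  show "a + b = b + a"
    by transfer (rule Rel_refl, simp add: Rel_def, simp add: Rel_def nc_add_def fun_eq_iff add.commute)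
  show "0 + a = a"
    by transfer (rule Rel_refl, simp add: Rel_def, simp add: Rel_def nc_add_def nc_zero_def fun_eq_iff)
  show "- a + a = 0"
    by transfer (rule Rel_refl, simp add: Rel_def, simp add: Rel_def nc_add_def nc_smult_def nc_zero_def fun_eq_iff)
  show "a - b = a + - b"
    by transfer (rule Rel_refl, simp add: Rel_def, simp add: Rel_def nc_add_def nc_sub_def nc_smult_def fun_eq_iff)
  show "a * b * c = a * (b * c)"
    by transfer (rule Rel_refl, simp add: Rel_def, simp add: Rel_def nc_mult_assoc)
  show "1 * a = a"
    by transfer (rule Rel_refl, simp add: Rel_def, simp add: Rel_def)
  show "a * 1 = a"
    by transfer (rule Rel_refl, simp add: Rel_def, simp add: Rel_def)
  show "(a + b) * c = a * c + b * c"
    by transfer (rule Rel_refl, simp add: Rel_def, simp add: Rel_def nc_mult_add_left)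
  show "a * (b + c) = a * b + a * c"
    by transfer (rule Rel_refl, simp add: Rel_def, simp add: Rel_def nc_mult_add_right)
  show "(0::U) \<noteq> 1"
  proof transfer
    show "\<not> Rel nc_zero nc_one"
    proof
      assume "Rel nc_zero nc_one"
      then have "nc_sub nc_zero nc_one \<in> SI" by (simp add: Rel_def)
      then have "rho (nc_sub nc_zero nc_one) (\<lambda>k. if k = 0 then 1 else 0) 0 = 0"
        using ideal_props by auto
      then show False by (simp add: rho_sub rho_zero rho_one)
    qed
  qed
qed
end


lemma Rel_self: "nc_finite a \<Longrightarrow> Rel a a" by (simp add: Rel_refl)

lemma rep_abs_Rel: "nc_finite a \<Longrightarrow> Rel (rep_U (abs_U a)) a"
  by (rule rep_abs_rsp_left[OF Quotient3_U Rel_self])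

lemma abs_eq: "Rel a b \<Longrightarrow> abs_U a = abs_U b"
  using Quotient3_rel[OF Quotient3_U, of a b] by simp

lemma abs_eq_iff: "nc_finite a \<Longrightarrow> nc_finite b \<Longrightarrow> abs_U a = abs_U b \<longleftrightarrow> nc_sub a b \<in> SI"
  using Quotient3_rel[OF Quotient3_U, of a b] by (simp add: Rel_self) (simp add: Rel_def)

lemma abs_mult: "nc_finite a \<Longrightarrow> nc_finite b \<Longrightarrow> abs_U (nc_mult a b) = abs_U a * abs_U b"
  unfolding times_U_def map_fun_apply
  by (rule abs_eq, rule resp_mult) (auto simp: rep_abs_Rel part_equivp_symp[OF part_equivp_Rel])

lemma abs_add: "nc_finite a \<Longrightarrow> nc_finite b \<Longrightarrow> abs_U (nc_add a b) = abs_U a + abs_U b"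
  unfolding plus_U_def map_fun_apply
  by (rule abs_eq, rule resp_add) (auto simp: rep_abs_Rel part_equivp_symp[OF part_equivp_Rel])

lemma abs_sub: "nc_finite a \<Longrightarrow> nc_finite b \<Longrightarrow> abs_U (nc_sub a b) = abs_U a - abs_U b"
  unfolding minus_U_def map_fun_apply
  by (rule abs_eq, rule resp_sub) (auto simp: rep_abs_Rel part_equivp_symp[OF part_equivp_Rel])

lemma abs_zero: "abs_U nc_zero = 0"
  unfolding zero_U_def by simp

lemma abs_one: "abs_U nc_one = 1"
  unfolding one_U_def by simp

definition sc :: "complex \<Rightarrow> U" where "sc c = abs_U (nc_const c)"

lemma abs_smult: "nc_finite a \<Longrightarrow> abs_U (nc_smult c a) = sc c * abs_U a"
  by (simp add: sc_def abs_mult[symmetric] nc_mult_const_left)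

lemma abs_const: "abs_U (nc_const c) = sc c" by (simp add: sc_def)

lemma U_cases: obtains a where "nc_finite a" "x = abs_U a"
proof -
  have "Rel (rep_U x) (rep_U x)" by (rule Quotient3_rep_reflp[OF Quotient3_U])
  moreover have "x = abs_U (rep_U x)" by (simp add: Quotient3_abs_rep[OF Quotient3_U])
  ultimately show ?thesis using that by (auto simp: Rel_def)
qed

lemma sc_add: "sc (a + b) = sc a + sc b"
proof -
  have eq: "nc_const (a+b) = nc_add (nc_const a) (nc_const b)" by (simp add: nc_const_def nc_add_def fun_eq_iff)
  show ?thesis unfolding sc_def eq by (simp add: abs_add)
qed

lemma sc_mult: "sc (a * b) = sc a * sc b"
proof -
  have eq: "nc_mult (nc_const a) (nc_const b) = nc_const (a*b)"
    unfolding nc_mult_const_left by (simp add: nc_const_def nc_smult_def fun_eq_iff)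
  show ?thesis unfolding sc_def eq[symmetric] by (simp add: abs_mult)
qed

lemma sc_one[simp]: "sc 1 = 1" by (simp add: sc_def abs_one[symmetric] nc_one_def)
lemma sc_zero[simp]: "sc 0 = 0"
proof -
  have eq: "nc_const 0 = nc_zero" by (simp add: nc_const_def nc_zero_def fun_eq_iff)
  show ?thesis unfolding sc_def eq by (simp add: abs_zero)
qed

lemma sc_neg: "sc (- a) = - sc a"
  using neg_eq_iff_add_eq_0[of "sc a" "sc(-a)"] sc_add[of a "-a"] by simp

lemma sc_diff: "sc (a - b) = sc a - sc b"
  using sc_add[of a "-b"] by (simp add: sc_neg)

lemma sc_of_nat: "sc (of_nat n) = of_nat n"
  by (induction n) (simp_all add: sc_add)

lemma sc_numeral[simp]: "sc (numeral n) = numeral n"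
  using sc_of_nat[of "numeral n"] by simp

lemma sc_comm: "sc c * x = x * sc c"
proof -
  obtain a where a: "nc_finite a" "x = abs_U a" by (rule U_cases)
  show ?thesis by (simp add: a sc_def abs_mult[symmetric] nc_mult_const_left nc_mult_const_right)
qed

lemma sc_comm2: "x * (sc c * y) = sc c * (x * y)"
  by (metis mult.assoc sc_comm)

lemma abs_pow: "nc_finite a \<Longrightarrow> abs_U (nc_pow a n) = abs_U a ^ n"
  by (induction n) (simp_all add: abs_one abs_mult)

lemma abs_comm: "nc_finite a \<Longrightarrow> nc_finite b \<Longrightarrow> abs_U (nc_comm a b) = abs_U a * abs_U b - abs_U b * abs_U a"
  by (simp add: nc_comm_def abs_sub abs_mult)

lemma abs_ideal: "a \<in> SI \<Longrightarrow> abs_U a = 0"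
proof -
  assume a: "a \<in> SI"
  then have "nc_finite a" using ideal_props by blast
  moreover have "nc_sub a nc_zero = a" by (simp add: nc_sub_def nc_zero_def fun_eq_iff)
  ultimately show ?thesis using a by (simp add: abs_zero[symmetric] abs_eq_iff)
qed

lemma abs_zero_iff: "nc_finite a \<Longrightarrow> abs_U a = 0 \<longleftrightarrow> a \<in> SI"
proof -
  assume "nc_finite a"
  moreover have "nc_sub a nc_zero = a" by (simp add: nc_sub_def nc_zero_def fun_eq_iff)
  ultimately show ?thesis by (simp add: abs_zero[symmetric] abs_eq_iff)
qed

definition eU :: U where "eU = abs_U uE"
definition fU :: U where "fU = abs_U uF"
definition hU :: U where "hU = abs_U uH"

lemma fin_u[simp]: "nc_finite uE" "nc_finite uF" "nc_finite uH"
  by (simp_all add: uE_def uF_def uH_def)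

lemma relHE: "hU * eU = eU * hU + 2 * eU"
proof -
  have "nc_sub (nc_comm uH uE) (nc_smult 2 uE) \<in> SI" by (rule nc_ideal.gen) (simp add: sl2_rels_def)
  then have "abs_U (nc_sub (nc_comm uH uE) (nc_smult 2 uE)) = 0" by (rule abs_ideal)
  then show ?thesis by (simp add: abs_sub abs_comm abs_smult eU_def hU_def algebra_simps)
qed

lemma relHF: "hU * fU = fU * hU - 2 * fU"
proof -
  have "nc_add (nc_comm uH uF) (nc_smult 2 uF) \<in> SI" by (rule nc_ideal.gen) (simp add: sl2_rels_def)
  then have "abs_U (nc_add (nc_comm uH uF) (nc_smult 2 uF)) = 0" by (rule abs_ideal)
  then show ?thesis by (simp add: abs_add abs_comm abs_smult fU_def hU_def algebra_simps eq_neg_iff_add_eq_0)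
qed

lemma relEF: "eU * fU = fU * eU + hU"
proof -
  have "nc_sub (nc_comm uE uF) uH \<in> SI" by (rule nc_ideal.gen) (simp add: sl2_rels_def)
  then have "abs_U (nc_sub (nc_comm uE uF) uH) = 0" by (rule abs_ideal)
  then show ?thesis by (simp add: abs_sub abs_comm eU_def fU_def hU_def algebra_simps)
qed


definition scq :: "int \<Rightarrow> U" where "scq q = sc (of_int q)"

lemma scq_add: "scq (a + b) = scq a + scq b" by (simp add: scq_def sc_add)
lemma scq_mult: "scq (a * b) = scq a * scq b" by (simp add: scq_def sc_mult)
lemma scq_0[simp]: "scq 0 = 0" by (simp add: scq_def)
lemma scq_1[simp]: "scq 1 = 1" by (simp add: scq_def)
lemma scq_comm: "scq q * x = x * scq q" by (simp add: scq_def sc_comm)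
lemma scq_comm2: "x * (scq q * y) = scq q * (x * y)" by (simp add: scq_def sc_comm2)

type_synonym mon = "nat \<times> nat \<times> nat"
type_synonym pol = "(mon \<times> int) list"

definition Im :: "mon \<Rightarrow> U" where "Im m = (case m of (a,b,c) \<Rightarrow> fU^a * hU^b * eU^c)"
definition Ip :: "pol \<Rightarrow> U" where "Ip P = sum_list (map (\<lambda>x. scq (snd x) * Im (fst x)) P)"

lemma Ip_Nil[simp]: "Ip [] = 0" by (simp add: Ip_def)
lemma Ip_Cons[simp]: "Ip (x#P) = scq (snd x) * Im (fst x) + Ip P" by (simp add: Ip_def)
lemma Ip_append[simp]: "Ip (P @ Q) = Ip P + Ip Q" by (simp add: Ip_def)

definition scp :: "int \<Rightarrow> pol \<Rightarrow> pol" where "scp q P = map (\<lambda>x. (fst x, q * snd x)) P"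
lemma Ip_scp: "Ip (scp q P) = scq q * Ip P"
  by (induction P) (simp_all add: scp_def scq_mult distrib_left mult.assoc)

definition shF :: "nat \<Rightarrow> pol \<Rightarrow> pol" where
  "shF k P = map (\<lambda>x. case x of ((a,b,c),q) \<Rightarrow> ((a+k,b,c),q)) P"

lemma Im_shift: "Im (a+k,b,c) = fU^k * Im (a,b,c)"
proof -
  have "fU^(a+k) = fU^k * fU^a" by (simp add: power_add[symmetric] add.commute)
  then show ?thesis by (simp add: Im_def mult.assoc)
qed

lemma Ip_shF: "Ip (shF k P) = fU^k * Ip P"
  by (induction P) (auto simp: shF_def Im_shift distrib_left scq_comm2 split: prod.splits)

lemma h_fpow: "hU * fU^a = fU^a * hU - sc (2 * of_nat a) * fU^a"
proof (induction a)
  case 0 then show ?case by simp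
next
  case (Suc a)
  have c: "sc (2 * of_nat (Suc a)) = sc (2 * of_nat a) + 2" by (simp add: sc_add algebra_simps)
  have "hU * fU^Suc a = (hU * fU) * fU^a" by (simp add: mult.assoc)
  also have "\<dots> = fU * (hU * fU^a) - 2 * (fU * fU^a)" by (simp add: relHF algebra_simps)
  also have "\<dots> = fU * (fU^a * hU - sc (2 * of_nat a) * fU^a) - 2 * (fU * fU^a)" by (simp add: Suc)
  also have "\<dots> = fU^Suc a * hU - sc (2 * of_nat (Suc a)) * fU^Suc a"
    unfolding c by (simp add: algebra_simps sc_comm2)
  finally show ?case .
qed

definition hm :: "nat \<Rightarrow> nat \<Rightarrow> nat \<Rightarrow> pol" where
  "hm a b c = [((a,Suc b,c),1), ((a,b,c), - (2 * of_nat a))]"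

lemma Ip_hm: "Ip (hm a b c) = hU * Im (a,b,c)"
proof -
  have "hU * Im (a,b,c) = (hU * fU^a) * hU^b * eU^c" by (simp add: Im_def mult.assoc)
  also have "\<dots> = Im (a, Suc b, c) - sc (2 * of_nat a) * Im (a,b,c)"
    by (simp add: h_fpow Im_def algebra_simps)
  finally show ?thesis by (simp add: hm_def scq_def sc_neg of_int_mult of_int_minus)
qed

definition pH :: "pol \<Rightarrow> pol" where
  "pH P = concat (map (\<lambda>x. case x of ((a,b,c),q) \<Rightarrow> scp q (hm a b c)) P)"

lemma Ip_pH: "Ip (pH P) = hU * Ip P"
  by (induction P) (auto simp: pH_def Ip_scp Ip_hm distrib_left scq_comm2 split: prod.splits)

fun ins :: "mon \<times> int \<Rightarrow> pol \<Rightarrow> pol" where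
  "ins x [] = [x]"
| "ins x (y#P) = (if fst x = fst y then (fst y, snd x + snd y) # P else y # ins x P)"

lemma Ip_ins: "Ip (ins x P) = scq (snd x) * Im (fst x) + Ip P"
  by (induction P) (auto simp: scq_add distrib_right algebra_simps)

definition norm :: "pol \<Rightarrow> pol" where
  "norm P = filter (\<lambda>x. snd x \<noteq> 0) (foldr ins P [])"

lemma Ip_filter: "Ip (filter (\<lambda>x. snd x \<noteq> 0) P) = Ip P"
  by (induction P) auto

lemma Ip_norm: "Ip (norm P) = Ip P"
proof -
  have "Ip (foldr ins P []) = Ip P" by (induction P) (simp_all add: Ip_ins)
  then show ?thesis by (simp add: norm_def Ip_filter)
qed

definition stepH :: "pol \<Rightarrow> pol" where "stepH P = norm (pH P @ scp (-2) P)"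

primrec em0 :: "nat \<Rightarrow> nat \<Rightarrow> pol" where
  "em0 0 c = [((0,0,Suc c),1)]"
| "em0 (Suc b) c = stepH (em0 b c)"

lemma relEH: "eU * hU = hU * eU - 2 * eU" by (simp add: relHE)

lemma Ip_em0: "Ip (em0 b c) = eU * Im (0,b,c)"
proof (induction b)
  case 0 then show ?case by (simp add: Im_def)
next
  case (Suc b)
  have "eU * Im (0, Suc b, c) = (eU * hU) * Im (0,b,c)" by (simp add: Im_def mult.assoc)
  also have "\<dots> = hU * (eU * Im (0,b,c)) - 2 * (eU * Im (0,b,c))" by (simp add: relEH algebra_simps)
  finally show ?case
    by (simp add: stepH_def Ip_norm Ip_pH Ip_scp Suc scq_def of_int_minus sc_neg)
qed

lemma e_fpow: "eU * fU^Suc a = fU^Suc a * eU + sc (of_nat (Suc a)) * (fU^a * hU) - sc (of_nat (Suc a) * of_nat a) * fU^a"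
proof (induction a)
  case 0 then show ?case by (simp add: relEF)
next
  case (Suc a)
  have c1: "sc (of_nat (Suc (Suc a))) = sc (of_nat (Suc a)) + 1" by (simp add: sc_add algebra_simps)
  have c2: "sc (of_nat (Suc (Suc a)) * of_nat (Suc a)) = sc (of_nat (Suc a) * of_nat a) + sc (2 * of_nat (Suc a))"
    by (simp only: sc_add[symmetric]) (simp add: algebra_simps)
  have "eU * fU^Suc (Suc a) = (eU * fU) * fU^Suc a" by (simp add: mult.assoc)
  also have "\<dots> = fU * (eU * fU^Suc a) + hU * fU^Suc a" by (simp add: relEF algebra_simps)
  also have "\<dots> = fU * (fU^Suc a * eU + sc (of_nat (Suc a)) * (fU^a * hU) - sc (of_nat (Suc a) * of_nat a) * fU^a)
       + (fU^Suc a * hU - sc (2 * of_nat (Suc a)) * fU^Suc a)" by (simp only: Suc h_fpow)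
  also have "\<dots> = fU^Suc (Suc a) * eU + sc (of_nat (Suc (Suc a))) * (fU^Suc a * hU) - sc (of_nat (Suc (Suc a)) * of_nat (Suc a)) * fU^Suc a"
    unfolding c1 c2 by (simp add: algebra_simps sc_comm2 del: of_nat_Suc)
  finally show ?case .
qed

primrec em :: "nat \<Rightarrow> nat \<Rightarrow> nat \<Rightarrow> pol" where
  "em 0 b c = em0 b c"
| "em (Suc a) b c = shF (Suc a) (em0 b c) @ [((a,Suc b,c), of_nat (Suc a)), ((a,b,c), - (of_nat (Suc a) * of_nat a))]"

lemma Ip_em: "Ip (em a b c) = eU * Im (a,b,c)"
proof (cases a)
  case 0 then show ?thesis by (simp add: Ip_em0)
next
  case (Suc a')
  have "eU * Im (a,b,c) = (eU * fU^Suc a') * (hU^b * eU^c)" by (simp add: Im_def Suc mult.assoc)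
  also have "\<dots> = (fU^Suc a' * eU + sc (of_nat (Suc a')) * (fU^a' * hU) - sc (of_nat (Suc a') * of_nat a') * fU^a') * (hU^b * eU^c)"
    by (simp only: e_fpow)
  also have "\<dots> = fU^Suc a' * (eU * Im (0,b,c)) + sc (of_nat (Suc a')) * Im (a', Suc b, c)
      - sc (of_nat (Suc a') * of_nat a') * Im (a',b,c)"
    by (simp add: Im_def algebra_simps del: of_nat_Suc)
  also have "\<dots> = Ip (em a b c)"
    by (simp add: Suc Ip_shF Ip_em0 scq_def of_int_minus sc_neg of_int_mult del: of_nat_Suc)
  finally show ?thesis by simp
qed

definition pE :: "pol \<Rightarrow> pol" where
  "pE P = concat (map (\<lambda>x. case x of ((a,b,c),q) \<Rightarrow> scp q (em a b c)) P)"

lemma Ip_pE: "Ip (pE P) = eU * Ip P"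
  by (induction P) (auto simp: pE_def Ip_scp Ip_em distrib_left scq_comm2 split: prod.splits)

definition itE :: "nat \<Rightarrow> pol \<Rightarrow> pol" where "itE c = (norm \<circ> pE) ^^ c"
definition itH :: "nat \<Rightarrow> pol \<Rightarrow> pol" where "itH b = (norm \<circ> pH) ^^ b"

lemma Ip_itE: "Ip (itE c P) = eU^c * Ip P"
  by (induction c) (simp_all add: itE_def Ip_norm Ip_pE mult.assoc)
lemma Ip_itH: "Ip (itH c P) = hU^c * Ip P"
  by (induction c) (simp_all add: itH_def Ip_norm Ip_pH mult.assoc)

definition mulmon :: "mon \<Rightarrow> pol \<Rightarrow> pol" where
  "mulmon m P = (case m of (a,b,c) \<Rightarrow> shF a (itH b (itE c P)))"

lemma Ip_mulmon: "Ip (mulmon m P) = Im m * Ip P"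
  by (cases m) (simp add: mulmon_def Ip_shF Ip_itH Ip_itE Im_def mult.assoc)

definition mulp :: "pol \<Rightarrow> pol \<Rightarrow> pol" where
  "mulp P Q = norm (concat (map (\<lambda>x. scp (snd x) (mulmon (fst x) Q)) P))"

lemma Ip_mulp: "Ip (mulp P Q) = Ip P * Ip Q"
proof -
  have "Ip (concat (map (\<lambda>x. scp (snd x) (mulmon (fst x) Q)) P)) = Ip P * Ip Q"
    by (induction P) (simp_all add: Ip_scp Ip_mulmon distrib_right mult.assoc)
  then show ?thesis by (simp add: mulp_def Ip_norm)
qed

datatype ex = EG sl2gen | ES int | EAdd ex ex | ESub ex ex | EMul ex ex | EP pol

primrec Iex :: "ex \<Rightarrow> U" where
  "Iex (EG g) = (case g of gE \<Rightarrow> eU | gF \<Rightarrow> fU | gH \<Rightarrow> hU)"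
| "Iex (ES q) = scq q"
| "Iex (EAdd x y) = Iex x + Iex y"
| "Iex (ESub x y) = Iex x - Iex y"
| "Iex (EMul x y) = Iex x * Iex y"
| "Iex (EP P) = Ip P"

primrec nfx :: "ex \<Rightarrow> pol" where
  "nfx (EG g) = (case g of gE \<Rightarrow> [((0,0,1),1)] | gF \<Rightarrow> [((1,0,0),1)] | gH \<Rightarrow> [((0,1,0),1)])"
| "nfx (ES q) = [((0,0,0),q)]"
| "nfx (EAdd x y) = norm (nfx x @ nfx y)"
| "nfx (ESub x y) = norm (nfx x @ scp (-1) (nfx y))"
| "nfx (EMul x y) = mulp (nfx x) (nfx y)"
| "nfx (EP P) = P"

lemma Ip_nfx: "Ip (nfx x) = Iex x"
  by (induction x) (auto simp: Ip_norm Ip_scp Ip_mulp Im_def scq_def sc_neg split: sl2gen.splits)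

lemma nfx_check: "nfx (ESub x y) = [] \<Longrightarrow> Iex x = Iex y"
  using Ip_nfx[of "ESub x y"] by simp


lemma sc_comm3: "sc x * (sc y * z) = sc (x * y) * z"
  by (simp add: sc_mult mult.assoc)

lemma sc_comm2': "sc x * (sc y * z) = sc (x * y) * z" by (rule sc_comm3)

lemma omega_gen:
  fixes a b c d a' b' c' d' dl dl' :: U
  assumes a: "a = sc (1/16) * a'" and b: "b = sc (1/16) * b'" and c: "c = sc (1/16) * c'" and d: "d = sc (1/64) * d'"
    and dl: "dl = a + b + c" and dl': "dl' = a' + b' + c'"
    and chk: "sc 2 * (d'*d') + (b'*(a'*c') + c'*(a'*b')) - sc 32 * (a'*b' + a'*c')
       = sc 288 + sc 48 * dl' - sc 6 * (dl' * dl')"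
    and z: "b * g - c * h = 0"
  shows "d * d + sc (1/2) * (b*(a*c) + c*(a*b)) + a*a + (b * g - c * h) - a * dl
      = sc (9/256) + (sc (3/32) + (sc (-3/16) + 0 * dl) * dl) * dl"
proof -
  have s1: "a*a - a*dl = -(a*b + a*c)" by (simp add: dl algebra_simps)
  have m1: "d*d = sc (1/4096) * (d'*d')" by (simp add: d sc_comm2[of a'] sc_comm2[of b'] sc_comm2[of c'] sc_comm2[of d'] sc_comm2[of dl'] sc_comm3 mult.assoc)
  have m2: "b*(a*c) = sc (1/4096) * (b'*(a'*c'))" by (simp add: a b c sc_comm2[of a'] sc_comm2[of b'] sc_comm2[of c'] sc_comm2[of d'] sc_comm2[of dl'] sc_comm3 mult.assoc)
  have m3: "c*(a*b) = sc (1/4096) * (c'*(a'*b'))" by (simp add: a b c sc_comm2[of a'] sc_comm2[of b'] sc_comm2[of c'] sc_comm2[of d'] sc_comm2[of dl'] sc_comm3 mult.assoc)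
  have m4: "a*b = sc (1/256) * (a'*b')" by (simp add: a b sc_comm2[of a'] sc_comm2[of b'] sc_comm2[of c'] sc_comm2[of d'] sc_comm2[of dl'] sc_comm3 mult.assoc)
  have m5: "a*c = sc (1/256) * (a'*c')" by (simp add: a c sc_comm2[of a'] sc_comm2[of b'] sc_comm2[of c'] sc_comm2[of d'] sc_comm2[of dl'] sc_comm3 mult.assoc)
  have dlr: "dl = sc (1/16) * dl'" by (simp add: dl dl' a b c distrib_left)
  have "d * d + sc (1/2) * (b*(a*c) + c*(a*b)) + a*a + (b * g - c * h) - a * dl
      = d * d + sc (1/2) * (b*(a*c) + c*(a*b)) - (a*b + a*c)"
    using s1 z by (simp add: algebra_simps)
  also have "\<dots> = sc (1/8192) * (sc 2 * (d'*d') + (b'*(a'*c') + c'*(a'*b')) - sc 32 * (a'*b' + a'*c'))"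
    unfolding m2 m3 unfolding m1 m4 m5 by (simp add: distrib_left right_diff_distrib sc_comm3 del: sc_numeral)
  also have "\<dots> = sc (1/8192) * (sc 288 + sc 48 * dl' - sc 6 * (dl' * dl'))" by (simp only: chk)
  also have "\<dots> = sc (9/256) + (sc (3/32) + (sc (-3/16) + 0 * dl) * dl) * dl"
    unfolding dlr by (simp add: distrib_left distrib_right right_diff_distrib left_diff_distrib sc_mult[symmetric] sc_comm2[of a'] sc_comm2[of b'] sc_comm2[of c'] sc_comm2[of d'] sc_comm2[of dl'] sc_comm3 mult.assoc sc_neg del: sc_numeral)
  finally show ?thesis .
qed

lemma comm_gen:
  fixes x y z d x' y' z' d' :: U
  assumes x: "x = sc (1/16) * x'" and y: "y = sc (1/16) * y'" and z: "z = sc (1/16) * z'" and d: "d = sc (1/64) * d'"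
    and chk: "(x'*d' - d'*x') + sc 4 * (x'*y' - z'*x') = 0"
  shows "(x*d - d*x) + (x*y - z*x) = 0"
proof -
  have "(x*d - d*x) + (x*y - z*x) = sc (1/1024) * ((x'*d' - d'*x') + sc 4 * (x'*y' - z'*x'))"
    unfolding x y z d
    by (simp add: distrib_left right_diff_distrib sc_comm2[of x'] sc_comm2[of y'] sc_comm2[of z'] sc_comm2[of d'] sc_comm3 mult.assoc del: sc_numeral)
  also have "\<dots> = 0" by (simp only: chk mult_zero_right)
  finally show ?thesis .
qed

section \<open>sharp into U\<close>

lemma fin_sharp_gen[simp]: "nc_finite (sharp_gen g)"
  by (cases g) (simp_all add: sharp_gen_def uE_def uF_def uH_def)

lemma fin_sharp[simp]: "nc_finite a \<Longrightarrow> nc_finite (sharp a)"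
  unfolding sharp_def by (rule fin_subst) auto

definition SH :: "regen ncpoly \<Rightarrow> U" where "SH a = abs_U (sharp a)"

lemma SH_mult: "nc_finite a \<Longrightarrow> nc_finite b \<Longrightarrow> SH (nc_mult a b) = SH a * SH b"
  by (simp add: SH_def sharp_def subst_mult abs_mult fin_sharp[unfolded sharp_def])
lemma SH_add: "nc_finite a \<Longrightarrow> nc_finite b \<Longrightarrow> SH (nc_add a b) = SH a + SH b"
  by (simp add: SH_def sharp_def subst_add abs_add fin_sharp[unfolded sharp_def])
lemma SH_sub: "nc_finite a \<Longrightarrow> nc_finite b \<Longrightarrow> SH (nc_sub a b) = SH a - SH b"
  by (simp add: SH_def sharp_def subst_sub abs_sub fin_sharp[unfolded sharp_def])
lemma SH_smult: "nc_finite a \<Longrightarrow> SH (nc_smult c a) = sc c * SH a"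
  by (simp add: SH_def sharp_def subst_smult abs_smult fin_sharp[unfolded sharp_def])
lemma SH_comm: "nc_finite a \<Longrightarrow> nc_finite b \<Longrightarrow> SH (nc_comm a b) = SH a * SH b - SH b * SH a"
  by (simp add: nc_comm_def SH_sub SH_mult)
lemma SH_pow: "nc_finite a \<Longrightarrow> SH (nc_pow a n) = SH a ^ n"
  by (induction n) (simp_all add: SH_def sharp_def subst_const' abs_one SH_mult[unfolded SH_def sharp_def])
lemma SH_gen: "SH (nc_gen g) = abs_U (sharp_gen g)"
  by (simp add: SH_def sharp_def subst_gen)

lemma fin_r[simp]: "nc_finite rA" "nc_finite rB" "nc_finite rC" "nc_finite rD"
  by (simp_all add: rA_def rB_def rC_def rD_def)

lemmas abs_simps = abs_mult abs_add abs_sub abs_smult abs_const eU_def[symmetric] fU_def[symmetric] hU_def[symmetric]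

abbreviation "xE \<equiv> EG gE"
abbreviation "xF \<equiv> EG gF"
abbreviation "xH \<equiv> EG gH"

definition xA :: ex where "xA = EMul (ESub (EAdd xE xF) (ES 2)) (EAdd (EAdd xE xF) (ES 2))"
definition xB :: ex where "xB = EMul (ESub xH (ES 2)) (EAdd xH (ES 2))"
definition xC :: ex where "xC = ESub (EMul (ES (-1)) (EMul (ESub xE xF) (ESub xE xF))) (ES 4)"
definition xD :: ex where "xD = ESub (EMul (EAdd xH (ES 2)) (EMul xF xF)) (EMul (ESub xH (ES 2)) (EMul xE xE))"

lemma UA: "SH rA = sc (1/16) * Iex xA"
  by (simp add: rA_def SH_gen sharp_gen_def abs_simps uE_def[symmetric] uF_def[symmetric] xA_def scq_def)
lemma UB: "SH rB = sc (1/16) * Iex xB"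
  by (simp add: rB_def SH_gen sharp_gen_def abs_simps uH_def[symmetric] xB_def scq_def)
lemma UD: "SH rD = sc (1/64) * Iex xD"
  by (simp add: rD_def SH_gen sharp_gen_def abs_simps uE_def[symmetric] uF_def[symmetric] uH_def[symmetric] xD_def scq_def)

lemma diff_sq: "X * s = s * X \<Longrightarrow> (X - s) * (X + s) = X * X - s * (s::U)"
  by (simp add: algebra_simps)

lemma UC: "SH rC = sc (1/16) * Iex xC"
proof -
  let ?y = "eU - fU"
  have 1: "sc \<i> * eU - sc \<i> * fU = sc \<i> * ?y" by (simp add: right_diff_distrib)
  have 2: "(sc \<i> * ?y) * sc 2 = sc 2 * (sc \<i> * ?y)" by (rule sc_comm[symmetric])
  have 3: "(sc \<i> * ?y) * (sc \<i> * ?y) = - (?y * ?y)"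
    by (simp add: mult.assoc sc_comm2[of ?y] sc_comm3 sc_neg del: sc_numeral)
  have "SH rC = sc (1/16) * ((sc \<i> * eU - sc \<i> * fU - sc 2) * (sc \<i> * eU - sc \<i> * fU + sc 2))"
    by (simp add: rC_def SH_gen sharp_gen_def abs_simps uE_def[symmetric] uF_def[symmetric] del: sc_numeral)
  also have "\<dots> = sc (1/16) * (- (?y * ?y) - sc 2 * sc 2)"
    unfolding 1 diff_sq[OF 2] 3 ..
  also have "\<dots> = sc (1/16) * Iex xC"
    by (simp add: xC_def scq_def sc_mult[symmetric] sc_neg del: sc_numeral)
  finally show ?thesis .
qed

lemma nfx_zero: "nfx x = [] \<Longrightarrow> Iex x = 0"
  using Ip_nfx[of x] by simp

definition xcomm :: "ex \<Rightarrow> ex \<Rightarrow> ex" where "xcomm a b = ESub (EMul a b) (EMul b a)"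
definition xdl :: ex where "xdl = EAdd (EAdd xA xB) xC"
definition xRHS :: ex where "xRHS = ESub (EAdd (ES 288) (EMul (ES 48) xdl)) (EMul (ES 6) (EMul xdl xdl))"

lemma chk_gamma: "nfx (EAdd (xcomm xC xD) (EMul (ES 4) (ESub (EMul xC xB) (EMul xA xC)))) = []"
  by code_simp
lemma chk_beta: "nfx (EAdd (xcomm xB xD) (EMul (ES 4) (ESub (EMul xB xA) (EMul xC xB)))) = []"
  by code_simp
lemma chk_alpha: "nfx (EAdd (xcomm xA xD) (EMul (ES 4) (ESub (EMul xA xC) (EMul xB xA)))) = []"
  by code_simp
lemma chk_OA: "nfx (ESub (ESub (EAdd (EMul (ES 2) (EMul xD xD)) (EAdd (EMul xB (EMul xA xC)) (EMul xC (EMul xA xB))))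
    (EMul (ES 32) (EAdd (EMul xA xB) (EMul xA xC)))) xRHS) = []"
  by code_simp
lemma chk_OB: "nfx (ESub (ESub (EAdd (EMul (ES 2) (EMul xD xD)) (EAdd (EMul xC (EMul xB xA)) (EMul xA (EMul xB xC))))
    (EMul (ES 32) (EAdd (EMul xB xC) (EMul xB xA)))) xRHS) = []"
  by code_simp
lemma chk_OC: "nfx (ESub (ESub (EAdd (EMul (ES 2) (EMul xD xD)) (EAdd (EMul xA (EMul xC xB)) (EMul xB (EMul xC xA))))
    (EMul (ES 32) (EAdd (EMul xC xA) (EMul xC xB)))) xRHS) = []"
  by code_simp

lemma fin_rdelta: "nc_finite r_delta" by (simp add: r_delta_def)
lemmas fin_all = fin_mult fin_add fin_sub fin_smult fin_comm fin_r fin_gen fin_rdelta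

lemma SH_delta: "SH r_delta = SH rA + SH rB + SH rC"
  by (simp only: r_delta_def SH_add fin_all)

lemma gamma0: "(SH rC * SH rD - SH rD * SH rC) + (SH rC * SH rB - SH rA * SH rC) = 0"
  by (rule comm_gen[OF UC UB UA UD]) (use nfx_zero[OF chk_gamma] in \<open>simp add: xcomm_def scq_def del: sc_numeral\<close>)
lemma beta0: "(SH rB * SH rD - SH rD * SH rB) + (SH rB * SH rA - SH rC * SH rB) = 0"
  by (rule comm_gen[OF UB UA UC UD]) (use nfx_zero[OF chk_beta] in \<open>simp add: xcomm_def scq_def del: sc_numeral\<close>)
lemma alpha0: "(SH rA * SH rD - SH rD * SH rA) + (SH rA * SH rC - SH rB * SH rA) = 0"
  by (rule comm_gen[OF UA UC UB UD]) (use nfx_zero[OF chk_alpha] in \<open>simp add: xcomm_def scq_def del: sc_numeral\<close>)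

lemma chk_eq: "nfx (ESub x y) = [] \<Longrightarrow> Iex x = Iex y"
  by (rule nfx_check)

lemma Iex_xdl: "Iex xdl = Iex xA + Iex xB + Iex xC" by (simp add: xdl_def)

abbreviation "DL \<equiv> SH r_delta"

lemma OmA: "SH OmegaA = sc (9/256) + (sc (3/32) + (sc (-3/16) + 0 * DL) * DL) * DL"
proof -
  have "SH OmegaA = SH rD * SH rD + sc (1/2) * (SH rB * (SH rA * SH rC) + SH rC * (SH rA * SH rB)) + SH rA * SH rA
     + (SH rB * ((SH rC * SH rD - SH rD * SH rC) + (SH rC * SH rB - SH rA * SH rC))
        - SH rC * ((SH rB * SH rD - SH rD * SH rB) + (SH rB * SH rA - SH rC * SH rB))) - SH rA * DL"
    by (simp only: OmegaA_def r_mult3_def r_gamma_def r_beta_def SH_mult SH_add SH_sub SH_smult SH_comm fin_all)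
  also have "\<dots> = sc (9/256) + (sc (3/32) + (sc (-3/16) + 0 * DL) * DL) * DL"
  proof (rule omega_gen[OF UA UB UC UD SH_delta Iex_xdl])
    show "sc 2 * (Iex xD * Iex xD) + (Iex xB * (Iex xA * Iex xC) + Iex xC * (Iex xA * Iex xB)) - sc 32 * (Iex xA * Iex xB + Iex xA * Iex xC)
       = sc 288 + sc 48 * Iex xdl - sc 6 * (Iex xdl * Iex xdl)"
      using chk_eq[OF chk_OA] by (simp add: xRHS_def scq_def del: sc_numeral)
    show "SH rB * ((SH rC * SH rD - SH rD * SH rC) + (SH rC * SH rB - SH rA * SH rC))
        - SH rC * ((SH rB * SH rD - SH rD * SH rB) + (SH rB * SH rA - SH rC * SH rB)) = 0"
      by (simp only: gamma0 beta0 mult_zero_right diff_self)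
  qed
  finally show ?thesis .
qed

lemma OmB: "SH OmegaB = sc (9/256) + (sc (3/32) + (sc (-3/16) + 0 * DL) * DL) * DL"
proof -
  have "SH OmegaB = SH rD * SH rD + sc (1/2) * (SH rC * (SH rB * SH rA) + SH rA * (SH rB * SH rC)) + SH rB * SH rB
     + (SH rC * ((SH rA * SH rD - SH rD * SH rA) + (SH rA * SH rC - SH rB * SH rA))
        - SH rA * ((SH rC * SH rD - SH rD * SH rC) + (SH rC * SH rB - SH rA * SH rC))) - SH rB * DL"
    by (simp only: OmegaB_def r_mult3_def r_gamma_def r_alpha_def SH_mult SH_add SH_sub SH_smult SH_comm fin_all)
  also have "\<dots> = sc (9/256) + (sc (3/32) + (sc (-3/16) + 0 * DL) * DL) * DL"
  proof (rule omega_gen[OF UB UC UA UD])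
    show "DL = SH rB + SH rC + SH rA" by (simp add: SH_delta ac_simps)
    show "Iex xdl = Iex xB + Iex xC + Iex xA" by (simp add: Iex_xdl ac_simps)
    show "sc 2 * (Iex xD * Iex xD) + (Iex xC * (Iex xB * Iex xA) + Iex xA * (Iex xB * Iex xC)) - sc 32 * (Iex xB * Iex xC + Iex xB * Iex xA)
       = sc 288 + sc 48 * Iex xdl - sc 6 * (Iex xdl * Iex xdl)"
      using chk_eq[OF chk_OB] by (simp add: xRHS_def scq_def del: sc_numeral)
    show "SH rC * ((SH rA * SH rD - SH rD * SH rA) + (SH rA * SH rC - SH rB * SH rA))
        - SH rA * ((SH rC * SH rD - SH rD * SH rC) + (SH rC * SH rB - SH rA * SH rC)) = 0"
      by (simp only: gamma0 alpha0 mult_zero_right diff_self)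
  qed
  finally show ?thesis .
qed

lemma OmC: "SH OmegaC = sc (9/256) + (sc (3/32) + (sc (-3/16) + 0 * DL) * DL) * DL"
proof -
  have "SH OmegaC = SH rD * SH rD + sc (1/2) * (SH rA * (SH rC * SH rB) + SH rB * (SH rC * SH rA)) + SH rC * SH rC
     + (SH rA * ((SH rB * SH rD - SH rD * SH rB) + (SH rB * SH rA - SH rC * SH rB))
        - SH rB * ((SH rA * SH rD - SH rD * SH rA) + (SH rA * SH rC - SH rB * SH rA))) - SH rC * DL"
    by (simp only: OmegaC_def r_mult3_def r_beta_def r_alpha_def SH_mult SH_add SH_sub SH_smult SH_comm fin_all)
  also have "\<dots> = sc (9/256) + (sc (3/32) + (sc (-3/16) + 0 * DL) * DL) * DL"
  proof (rule omega_gen[OF UC UA UB UD])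
    show "DL = SH rC + SH rA + SH rB" by (simp add: SH_delta ac_simps)
    show "Iex xdl = Iex xC + Iex xA + Iex xB" by (simp add: Iex_xdl ac_simps)
    show "sc 2 * (Iex xD * Iex xD) + (Iex xA * (Iex xC * Iex xB) + Iex xB * (Iex xC * Iex xA)) - sc 32 * (Iex xC * Iex xA + Iex xC * Iex xB)
       = sc 288 + sc 48 * Iex xdl - sc 6 * (Iex xdl * Iex xdl)"
      using chk_eq[OF chk_OC] by (simp add: xRHS_def scq_def del: sc_numeral)
    show "SH rA * ((SH rB * SH rD - SH rD * SH rB) + (SH rB * SH rA - SH rC * SH rB))
        - SH rB * ((SH rA * SH rD - SH rD * SH rA) + (SH rA * SH rC - SH rB * SH rA)) = 0"
      by (simp only: beta0 alpha0 mult_zero_right diff_self)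
  qed
  finally show ?thesis .
qed


definition Pev :: "U \<Rightarrow> complex poly \<Rightarrow> U" where
  "Pev x p = (\<Sum>i<Suc (degree p). sc (coeff p i) * x^i)"

lemma Pev_gen: "degree p < n \<Longrightarrow> Pev x p = (\<Sum>i<n. sc (coeff p i) * x^i)"
  unfolding Pev_def
  by (rule sum.mono_neutral_left) (auto simp: coeff_eq_0)

lemma Pev_0[simp]: "Pev x 0 = 0" by (simp add: Pev_def)

lemma Pev_pCons: "Pev x (pCons c p) = sc c + Pev x p * x"
proof -
  have "Pev x (pCons c p) = (\<Sum>i<Suc (Suc (degree p)). sc (coeff (pCons c p) i) * x^i)"
    by (rule Pev_gen) (use degree_pCons_le[of c p] in auto)
  also have "\<dots> = sc c + (\<Sum>i<Suc (degree p). sc (coeff p i) * x^i * x)"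
    by (subst sum.lessThan_Suc_shift) (simp add: power_Suc2 mult.assoc del: power_Suc sum.lessThan_Suc)
  also have "\<dots> = sc c + Pev x p * x" by (simp add: Pev_def sum_distrib_right del: sum.lessThan_Suc)
  finally show ?thesis .
qed

lemma Pev_add: "Pev x (p + q) = Pev x p + Pev x q"
proof -
  let ?n = "Suc (max (degree p) (degree q))"
  have "degree (p + q) < ?n" using degree_add_le_max[of p q] by auto
  then show ?thesis
    by (simp add: Pev_gen[of "p+q" ?n] Pev_gen[of p ?n] Pev_gen[of q ?n] sc_add distrib_right sum.distrib)
qed

lemma Pev_smult: "Pev x (smult a q) = sc a * Pev x q"
proof -
  have "degree (smult a q) < Suc (degree q)" using degree_smult_le[of a q] by auto
  then have "Pev x (smult a q) = (\<Sum>i<Suc (degree q). sc (coeff (smult a q) i) * x^i)" by (rule Pev_gen)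
  also have "\<dots> = sc a * Pev x q"
    unfolding Pev_def by (simp add: sc_mult sum_distrib_left mult.assoc del: sum.lessThan_Suc)
  finally show ?thesis .
qed

lemma Pev_comm: "x * Pev x p = Pev x p * x"
proof (induction p)
  case 0 then show ?case by simp
next
  case (pCons c p)
  then show ?case by (simp add: Pev_pCons distrib_left distrib_right sc_comm mult.assoc[symmetric])
qed

lemma Pev_mult: "Pev x (p * q) = Pev x p * Pev x q"
proof (induction p)
  case 0 then show ?case by simp
next
  case (pCons c p)
  have "Pev x (pCons c p * q) = sc c * Pev x q + Pev x (p * q) * x"
    by (simp add: Pev_add Pev_smult Pev_pCons)
  also have "\<dots> = (sc c + Pev x p * x) * Pev x q"
    by (simp add: pCons.IH distrib_right mult.assoc Pev_comm)
  finally show ?case by (simp add: Pev_pCons)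
qed

lemma Pev_const: "Pev x [:c:] = sc c" by (simp add: Pev_pCons)
lemma Pev_X: "Pev x [:0,1:] = x" by (simp add: Pev_pCons)
lemma Pev_one: "Pev x 1 = 1" by (simp add: Pev_def)
lemma Pev_power: "Pev x (p ^ n) = Pev x p ^ n"
  by (induction n) (simp_all add: Pev_mult Pev_one)
lemma Pev_sum: "Pev x (\<Sum>i\<in>I. f i) = (\<Sum>i\<in>I. Pev x (f i))"
  by (induction I rule: infinite_finite_induct) (simp_all add: Pev_add)

lemma poly_coeff_expand: "(q::complex poly) = (\<Sum>j\<le>degree q. [:coeff q j:] * [:0,1:]^j)"
proof -
  have "q = (\<Sum>j\<le>degree q. monom (coeff q j) j)" by (simp add: poly_as_sum_of_monoms)
  also have "\<dots> = (\<Sum>j\<le>degree q. [:coeff q j:] * [:0,1:]^j)"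
    by (simp add: monom_altdef)
  finally show ?thesis .
qed

lemma Pev_eval_sum:
  fixes p :: "complex poly poly" and G :: "complex poly"
  shows "(\<Sum>i\<le>degree p. \<Sum>j\<le>degree (coeff p i). sc (coeff (coeff p i) j) * (Pev x G ^ i * x ^ j))
    = Pev x (poly p G)"
proof -
  have "(\<Sum>i\<le>degree p. \<Sum>j\<le>degree (coeff p i). sc (coeff (coeff p i) j) * (Pev x G ^ i * x ^ j))
     = Pev x (\<Sum>i\<le>degree p. \<Sum>j\<le>degree (coeff p i). [:coeff (coeff p i) j:] * (G ^ i * [:0,1:] ^ j))"
    by (simp add: Pev_sum Pev_mult Pev_power Pev_const Pev_X Pev_smult)
  also have "(\<Sum>i\<le>degree p. \<Sum>j\<le>degree (coeff p i). [:coeff (coeff p i) j:] * (G ^ i * [:0,1:] ^ j))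
      = (\<Sum>i\<le>degree p. (\<Sum>j\<le>degree (coeff p i). [:coeff (coeff p i) j:] * [:0,1:] ^ j) * G ^ i)"
    by (simp add: sum_distrib_left sum_distrib_right mult_smult_right mult_ac)
  also have "\<dots> = (\<Sum>i\<le>degree p. coeff p i * G ^ i)"
    by (simp only: poly_coeff_expand[symmetric])
  also have "\<dots> = poly p G" by (simp add: poly_altdef)
  finally show ?thesis .
qed


lemma sharp_zero: "sharp nc_zero = nc_zero"
  by (simp add: sharp_def nc_subst_def nc_zero_def fun_eq_iff)

lemma SH_zero: "SH nc_zero = 0" by (simp add: SH_def sharp_zero abs_zero)

lemma SH_sumfun:
  assumes "finite I" "\<And>i. i \<in> I \<Longrightarrow> nc_finite (F i)"
  shows "nc_finite (\<lambda>v. \<Sum>i\<in>I. F i v) \<and> SH (\<lambda>v. \<Sum>i\<in>I. F i v) = (\<Sum>i\<in>I. SH (F i))"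
  using assms
proof (induction I rule: finite_induct)
  case empty
  have "(\<lambda>v. \<Sum>i\<in>{}. F i v) = nc_zero" by (simp add: nc_zero_def fun_eq_iff)
  then show ?case by (simp add: SH_zero)
next
  case (insert a I)
  have eq: "(\<lambda>v. \<Sum>i\<in>insert a I. F i v) = nc_add (F a) (\<lambda>v. \<Sum>i\<in>I. F i v)"
    using insert by (simp add: nc_add_def fun_eq_iff)
  show ?case unfolding eq using insert by (simp add: SH_add)
qed

lemma SH_eval2:
  assumes "nc_finite X" "nc_finite Y"
  shows "nc_finite (nc_eval2 X Y p) \<and>
    SH (nc_eval2 X Y p) = (\<Sum>i\<le>degree p. \<Sum>j\<le>degree (coeff p i). sc (coeff (coeff p i) j) * (SH X ^ i * SH Y ^ j))"
proof -
  let ?T = "\<lambda>i j. nc_smult (coeff (coeff p i) j) (nc_mult (nc_pow X i) (nc_pow Y j))"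
  have fT: "nc_finite (?T i j)" for i j using assms by simp
  have inner: "nc_finite (\<lambda>w. \<Sum>j\<le>degree (coeff p i). ?T i j w) \<and>
      SH (\<lambda>w. \<Sum>j\<le>degree (coeff p i). ?T i j w) = (\<Sum>j\<le>degree (coeff p i). SH (?T i j))" for i
    by (rule SH_sumfun) (auto simp: fT)
  have eq: "nc_eval2 X Y p = (\<lambda>v. \<Sum>i\<le>degree p. (\<lambda>w. \<Sum>j\<le>degree (coeff p i). ?T i j w) v)"
    by (simp add: nc_eval2_def)
  have outer: "nc_finite (nc_eval2 X Y p) \<and> SH (nc_eval2 X Y p) = (\<Sum>i\<le>degree p. SH (\<lambda>w. \<Sum>j\<le>degree (coeff p i). ?T i j w))"
    unfolding eq by (rule SH_sumfun) (use inner in auto)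
  show ?thesis using outer inner assms by (simp add: SH_smult SH_mult SH_pow)
qed

definition rhoU :: "U \<Rightarrow> vec \<Rightarrow> vec" where "rhoU x = rho (rep_U x)"

lemma rho_Rel: "Rel a b \<Longrightarrow> rho a = rho b"
proof -
  assume r: "Rel a b"
  then have fa: "nc_finite a" and fb: "nc_finite b" by (auto simp: Rel_def)
  have "\<forall>v. rho (nc_sub a b) v = (\<lambda>k. 0)" using r ideal_props by (auto simp: Rel_def)
  then have "rho a v k - rho b v k = 0" for v k using rho_sub[OF fa fb] by (metis)
  then show "rho a = rho b" by (auto simp: fun_eq_iff)
qed

lemma rhoU_abs: "nc_finite a \<Longrightarrow> rhoU (abs_U a) = rho a"
  unfolding rhoU_def by (rule rho_Rel[OF rep_abs_Rel])

lemma rhoU_mult: "rhoU (x * y) v = rhoU x (rhoU y v)"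
proof -
  obtain a where a: "nc_finite a" "x = abs_U a" by (rule U_cases)
  obtain b where b: "nc_finite b" "y = abs_U b" by (rule U_cases)
  show ?thesis using a b by (simp add: abs_mult[symmetric] rhoU_abs rho_mult)
qed

lemma rhoU_add: "rhoU (x + y) v k = rhoU x v k + rhoU y v k"
proof -
  obtain a where a: "nc_finite a" "x = abs_U a" by (rule U_cases)
  obtain b where b: "nc_finite b" "y = abs_U b" by (rule U_cases)
  show ?thesis using a b by (simp add: abs_add[symmetric] rhoU_abs rho_add)
qed

lemma rhoU_sub: "rhoU (x - y) v k = rhoU x v k - rhoU y v k"
proof -
  obtain a where a: "nc_finite a" "x = abs_U a" by (rule U_cases)
  obtain b where b: "nc_finite b" "y = abs_U b" by (rule U_cases)
  show ?thesis using a b by (simp add: abs_sub[symmetric] rhoU_abs rho_sub)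
qed

lemma rhoU_sc: "rhoU (sc c) v k = smult c (v k)"
  by (simp add: sc_def rhoU_abs rho_const)

lemma rhoU_num: "rhoU (numeral n) v k = smult (numeral n) (v k)"
  using rhoU_sc[of "numeral n" v k] by simp

lemma rhoU_zero: "rhoU 0 v k = 0"
  by (simp add: abs_zero[symmetric] rhoU_abs rho_zero)

lemma rhoU_scal: "rhoU x (\<lambda>k. p * v k) k = p * rhoU x v k"
proof -
  obtain a where a: "nc_finite a" "x = abs_U a" by (rule U_cases)
  show ?thesis using a by (simp add: rhoU_abs rho_def act_scal sum_distrib_left mult.left_commute)
qed

lemma rhoU_e: "rhoU eU = opE" by (simp add: eU_def rhoU_abs uE_def rho_gen[THEN ext] fun_eq_iff)
lemma rhoU_f: "rhoU fU = opF" by (simp add: fU_def rhoU_abs uF_def rho_gen[THEN ext] fun_eq_iff)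
lemma rhoU_h: "rhoU hU = opH" by (simp add: hU_def rhoU_abs uH_def rho_gen[THEN ext] fun_eq_iff)

definition v0 :: vec where "v0 k = (if k = 0 then 1 else 0)"

definition sdl :: "complex poly" where "sdl = [:-3/4, 1/8, 1/16:]"

definition xL :: ex where
  "xL = ESub (EAdd (EAdd (EMul (ES 2) (EMul xE xF)) (EMul (ES 2) (EMul xF xE))) (EMul xH xH)) (ES 12)"

lemma chk_dl: "nfx (ESub xdl xL) = []" by code_simp

lemma DL_eq: "DL = sc (1/16) * Iex xL"
proof -
  have "DL = sc (1/16) * Iex xdl"
    by (simp add: SH_delta UA UB UC xdl_def distrib_left)
  then show ?thesis using chk_eq[OF chk_dl] by simp
qed

lemma rho_DL: "rhoU DL v0 k = sdl * v0 k"
proof -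
  have "rhoU DL v0 k = smult (1/16) (2 * opE (opF v0) k + 2 * opF (opE v0) k + opH (opH v0) k - 12 * v0 k)"
    by (simp add: DL_eq xL_def rhoU_mult rhoU_add rhoU_sub rhoU_sc rhoU_num rhoU_e rhoU_f rhoU_h scq_def smult_add_right smult_diff_right numeral_mult_conv_smult)
  also have "\<dots> = sdl * v0 k"
    by (cases k) (auto simp: opE_def opF_def opH_def v0_def sdl_def lam_def algebra_simps numeral_poly)
  finally show ?thesis .
qed


lemma rho_Pev: "rhoU (Pev DL q) v0 k = pcompose q sdl * v0 k"
proof (induction q arbitrary: k)
  case 0 then show ?case by (simp add: rhoU_zero)
next
  case (pCons c q)
  have r: "rhoU DL v0 = (\<lambda>k. sdl * v0 k)" by (simp add: rho_DL fun_eq_iff)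
  have "rhoU (Pev DL (pCons c q)) v0 k = smult c (v0 k) + rhoU (Pev DL q) (rhoU DL v0) k"
    by (simp add: Pev_pCons rhoU_add rhoU_sc rhoU_mult)
  also have "\<dots> = smult c (v0 k) + sdl * (pcompose q sdl * v0 k)"
    by (simp add: r rhoU_scal pCons.IH)
  also have "\<dots> = pcompose (pCons c q) sdl * v0 k"
    by (simp add: pcompose_pCons algebra_simps)
  finally show ?case .
qed

lemma deg_sdl: "degree sdl = 2" by (simp add: sdl_def)

lemma Pev_DL_zero: "Pev DL q = 0 \<longleftrightarrow> q = 0"
proof
  assume "Pev DL q = 0"
  then have "rhoU (Pev DL q) v0 0 = 0" by (simp add: rhoU_zero)
  then have "pcompose q sdl = 0" by (simp add: rho_Pev v0_def)
  then show "q = 0" by (rule pcompose_eq_0) (simp add: deg_sdl)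
qed simp

definition Gp :: "complex poly" where "Gp = [:9/256, 3/32, -3/16:]"

lemma f_xy_eq: "f_xy = smult [:256:] [:-Gp, 1:]"
  by (simp add: f_xy_def Gp_def)

lemma f_xy_dvd: "f_xy dvd p \<longleftrightarrow> [:-Gp, 1:] dvd p"
proof -
  have 1: "[:-Gp, 1:] dvd f_xy" unfolding f_xy_eq by (rule dvd_smult) simp
  have "[:-Gp, 1:] = smult [:1/256:] f_xy" by (simp add: f_xy_eq)
  then have 2: "f_xy dvd [:-Gp, 1:]" by (metis dvd_smult dvd_refl)
  show ?thesis using 1 2 dvd_trans by blast
qed

lemma fin_Omegas: "nc_finite OmegaA" "nc_finite OmegaB" "nc_finite OmegaC"
  by (simp_all add: OmegaA_def OmegaB_def OmegaC_def r_mult3_def r_alpha_def r_beta_def r_gamma_def r_delta_def)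

theorem lemma5p1:
  fixes \<Omega> :: "regen ncpoly" and p :: "complex poly poly"
  assumes "\<Omega> \<in> {OmegaA, OmegaB, OmegaC}"
  shows "zero_in_Usl2 (sharp (nc_eval2 \<Omega> r_delta p)) \<longleftrightarrow> f_xy dvd p"
proof -
  have hO: "SH \<Omega> = Pev DL Gp"
    using assms OmA OmB OmC by (auto simp: Gp_def Pev_pCons)
  have fO: "nc_finite \<Omega>" using assms fin_Omegas by auto
  have ev: "nc_finite (nc_eval2 \<Omega> r_delta p) \<and>
    SH (nc_eval2 \<Omega> r_delta p) = (\<Sum>i\<le>degree p. \<Sum>j\<le>degree (coeff p i). sc (coeff (coeff p i) j) * (SH \<Omega> ^ i * DL ^ j))"
    by (rule SH_eval2[OF fO fin_rdelta])
  then have fe: "nc_finite (sharp (nc_eval2 \<Omega> r_delta p))" by simp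
  have "SH (nc_eval2 \<Omega> r_delta p) = Pev DL (poly p Gp)"
    using ev by (simp add: hO Pev_eval_sum)
  then have "zero_in_Usl2 (sharp (nc_eval2 \<Omega> r_delta p)) \<longleftrightarrow> Pev DL (poly p Gp) = 0"
    using abs_zero_iff[OF fe] by (simp add: zero_in_Usl2_def SH_def)
  also have "\<dots> \<longleftrightarrow> poly p Gp = 0" by (rule Pev_DL_zero)
  also have "\<dots> \<longleftrightarrow> [:-Gp, 1:] dvd p" by (rule poly_eq_0_iff_dvd)
  also have "\<dots> \<longleftrightarrow> f_xy dvd p" by (rule f_xy_dvd[symmetric])
  finally show ?thesis .
qed


end
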